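(* Let $W$ be a complex vector space of complex dimension $2$ with a fixed complex basis, and for $v,w\in W$ let $\det(v,w)\in\mathbb{C}$ be the determinant with respect to this basis; for $K\in\mathcal{K}(W)$ put $\det(K,w)=\{\det(k,w): k\in K\}\subset\mathbb{C}$. Let $\mu$ be a continuous, translation invariant, monotone real-valued valuation on $\mathcal{K}(\mathbb{C})$ (with $\mathbb{C}\cong\mathbb{R}^2$) that is homogeneous of degree $1$. Then for each $K\in\mathcal{K}(W)$ the function $w\mapsto \mu(\det(K,w))$ is the support function of a unique $ZK\in\mathcal{K}(W^* )$, and the operator $Z:\mathcal{K}(W) \to \mathcal{K}(W^* )$ so defined is a continuous, translation invariant, $\mathrm{SL}(W,\mathbb{C})$-contravariant Minkowski valuation.
   Context: $\mathcal{K}(V)$ denotes the non-empty compact convex subsets of $V$ with the Hausdorff topology. A real-valued valuation $\mu$ satisfies $\mu(K\cup L)+\mu(K\cap L)=\mu(K)+\mu(L)$ whenever $K,L,K\cup L$ are convex bodies; monotone means $K\subset L\Rightarrow \mu(K)\le\mu(L)$; homogeneous of degree 1 means $\mu(tK)=t\mu(K)$ for $t\ge0$. The support function of $Q\in\mathcal{K}(W^* )$ is $h(Q,w)=\sup_{\xi\in Q}\langle\xi,w\rangle$ for $w\in W$. A Minkowski valuation satisfies $Z(K\cup L)+Z(K\cap L)=ZK+ZL$ (Minkowski sum) when $K,L,K\cup L\in\mathcal{K}(W)$; translation invariant: $Z(K+x)=ZK$; $\mathrm{SL}(W,\mathbb{C})$-contravariant: $Z(gK)=g^{-*}ZK$ for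 $g\in\mathrm{SL}(W,\mathbb{C})$, with $g^{-*}$ the inverse of the dual map. *)

theory Defs
  imports "HOL-Analysis.Analysis"
begin

definition convex_body :: "'a::euclidean_space set \<Rightarrow> bool" where
  "convex_body K \<longleftrightarrow> K \<noteq> {} \<and> compact K \<and> convex K"

definition hausdorff_dist :: "'a::metric_space set \<Rightarrow> 'a set \<Rightarrow> real" where
  "hausdorff_dist A B = max (SUP a\<in>A. infdist a B) (SUP b\<in>B. infdist b A)"

definition hausdorff_continuous ::
  "('a::euclidean_space set \<Rightarrow> 'b) \<Rightarrow> ('b \<Rightarrow> 'b \<Rightarrow> real) \<Rightarrow> bool" where
  "hausdorff_continuous F d \<longleftrightarrow>
     (\<forall>Ks K. (\<forall>n. convex_body (Ks n)) \<longrightarrow> convex_body K \<longrightarrow>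
        (\<lambda>n. hausdorff_dist (Ks n) K) \<longlonglongrightarrow> 0 \<longrightarrow>
        (\<lambda>n. d (F (Ks n)) (F K)) \<longlonglongrightarrow> 0)"

definition real_valuation :: "('a::euclidean_space set \<Rightarrow> real) \<Rightarrow> bool" where
  "real_valuation \<mu> \<longleftrightarrow>
     (\<forall>K L. convex_body K \<longrightarrow> convex_body L \<longrightarrow> convex_body (K \<union> L) \<longrightarrow>
        \<mu> (K \<union> L) + \<mu> (K \<inter> L) = \<mu> K + \<mu> L)"

definition monotone_on_bodies :: "('a::euclidean_space set \<Rightarrow> real) \<Rightarrow> bool" where
  "monotone_on_bodies \<mu> \<longleftrightarrow>
     (\<forall>K L. convex_body K \<longrightarrow> convex_body L \<longrightarrow> K \<subseteq> L \<longrightarrow> \<mu> K \<le> \<mu> L)"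

definition translation_invariant :: "('a::euclidean_space set \<Rightarrow> 'b) \<Rightarrow> bool" where
  "translation_invariant F \<longleftrightarrow>
     (\<forall>K x. convex_body K \<longrightarrow> F ((\<lambda>k. k + x) ` K) = F K)"

definition homogeneous_deg1 :: "('a::euclidean_space set \<Rightarrow> real) \<Rightarrow> bool" where
  "homogeneous_deg1 \<mu> \<longleftrightarrow>
     (\<forall>K t. convex_body K \<longrightarrow> t \<ge> 0 \<longrightarrow> \<mu> ((\<lambda>k. t *\<^sub>R k) ` K) = t * \<mu> K)"

definition minkowski_sum :: "'a::real_vector set \<Rightarrow> 'a set \<Rightarrow> 'a set" where
  "minkowski_sum A B = {a + b | a b. a \<in> A \<and> b \<in> B}"

definition minkowski_valuation :: "('a::euclidean_space set \<Rightarrow> 'b::euclidean_space set) \<Rightarrow> bool" where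
  "minkowski_valuation Z \<longleftrightarrow>
     (\<forall>K L. convex_body K \<longrightarrow> convex_body L \<longrightarrow> convex_body (K \<union> L) \<longrightarrow>
        minkowski_sum (Z (K \<union> L)) (Z (K \<inter> L)) = minkowski_sum (Z K) (Z L))"

text \<open>Support function. The real dual W* of W is identified with W via the real
  inner product, so \<open>\<langle>\<xi>,w\<rangle>\<close> is \<open>\<xi> \<bullet> w\<close>.\<close>
definition support_fun :: "'a::real_inner set \<Rightarrow> 'a \<Rightarrow> real" where
  "support_fun Q w = Sup ((\<lambda>\<xi>. \<xi> \<bullet> w) ` Q)"

definition det2 :: "complex^2 \<Rightarrow> complex^2 \<Rightarrow> complex" where
  "det2 v w = v $ 1 * w $ 2 - v $ 2 * w $ 1"

definition det_set :: "(complex^2) set \<Rightarrow> complex^2 \<Rightarrow> complex set" where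
  "det_set K w = (\<lambda>k. det2 k w) ` K"

definition Zdet :: "(complex set \<Rightarrow> real) \<Rightarrow> (complex^2) set \<Rightarrow> (complex^2) set" where
  "Zdet \<mu> K = (THE Q. convex_body Q \<and> (\<forall>w. support_fun Q w = \<mu> (det_set K w)))"

text \<open>SL(W,C): complex 2x2 matrices of determinant 1, acting by matrix-vector product;
  \<open>g\<^sup>-\<^sup>*\<close> is the inverse of the dual map, where (under the inner-product identification)
  the dual map of g is the adjoint of the real-linear map \<open>x \<mapsto> g x\<close>.\<close>
definition SL2C :: "(complex^2^2) set" where
  "SL2C = {g. det g = 1}"

definition dual_inv :: "complex^2^2 \<Rightarrow> complex^2 \<Rightarrow> complex^2" where
  "dual_inv g = inv (adjoint (\<lambda>x. g *v x))"

end

theory Submission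
  imports Defs
begin

lemma support_fun_upper:
  assumes "compact Q" "\<xi> \<in> Q"
  shows "\<xi> \<bullet> w \<le> support_fun Q w"
proof -
  have "bounded ((\<lambda>\<xi>. \<xi> \<bullet> w) ` Q)"
    by (intro compact_imp_bounded compact_continuous_image assms continuous_intros)
  then have "bdd_above ((\<lambda>\<xi>. \<xi> \<bullet> w) ` Q)" by (rule bounded_imp_bdd_above)
  then show ?thesis unfolding support_fun_def by (rule cSUP_upper[OF assms(2)])
qed

lemma support_fun_least:
  assumes "Q \<noteq> {}" "\<And>\<xi>. \<xi> \<in> Q \<Longrightarrow> \<xi> \<bullet> w \<le> c"
  shows "support_fun Q w \<le> c"
  unfolding support_fun_def using assms by (intro cSUP_least) auto

lemma support_fun_attained:
  assumes "compact Q" "Q \<noteq> {}"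
  obtains \<xi> where "\<xi> \<in> Q" "support_fun Q w = \<xi> \<bullet> w"
proof -
  have "continuous_on Q (\<lambda>\<xi>. \<xi> \<bullet> w)" by (intro continuous_intros)
  then obtain \<xi> where x: "\<xi> \<in> Q" "\<And>y. y \<in> Q \<Longrightarrow> y \<bullet> w \<le> \<xi> \<bullet> w"
    using continuous_attains_sup[OF assms, of "\<lambda>\<xi>. \<xi> \<bullet> w"] by blast
  have "support_fun Q w = \<xi> \<bullet> w"
    using support_fun_upper[OF assms(1) x(1), of w] support_fun_least[OF assms(2) x(2)]
    by linarith
  with x(1) that show ?thesis by blast
qed

lemma convex_body_eq_support:
  assumes "convex_body Q1" "convex_body Q2"
    and "\<And>w. support_fun Q1 w = support_fun Q2 w"
  shows "Q1 = Q2"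
proof -
  have *: "A \<subseteq> B" if A: "convex_body A" and B: "convex_body B"
      and eq: "\<And>w. support_fun A w = support_fun B w" for A B :: "'a set"
  proof
    fix x assume "x \<in> A"
    show "x \<in> B"
    proof (rule ccontr)
      assume "x \<notin> B"
      from B have "convex B" "closed B" "B \<noteq> {}" "compact B"
        by (auto simp: convex_body_def compact_imp_closed)
      then obtain a b where ab: "a \<bullet> x < b" "\<forall>y\<in>B. b < a \<bullet> y"
        using separating_hyperplane_closed_point[of B x] \<open>x \<notin> B\<close> by blast
      have "support_fun B (-a) \<le> -b"
        using ab(2) \<open>B \<noteq> {}\<close> by (intro support_fun_least) (auto simp: inner_commute less_imp_le)
      moreover have "x \<bullet> (-a) \<le> support_fun A (-a)"
        using A \<open>x \<in> A\<close> by (intro support_fun_upper) (auto simp: convex_body_def)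
      ultimately show False using eq[of "-a"] ab(1) by (simp add: inner_commute)
    qed
  qed
  show ?thesis using *[OF assms] *[OF assms(2,1)] assms(3) by (metis subset_antisym)
qed

lemma sublinear_convex_on:
  fixes h :: "'a::real_vector \<Rightarrow> real"
  assumes sub: "\<And>x y. h (x + y) \<le> h x + h y"
    and hom: "\<And>t x. t \<ge> 0 \<Longrightarrow> h (t *\<^sub>R x) = t * h x"
  shows "convex_on UNIV h"
proof (rule convex_onI)
  fix t :: real and x y assume t: "0 < t" "t < 1"
  have "h ((1 - t) *\<^sub>R x + t *\<^sub>R y) \<le> h ((1 - t) *\<^sub>R x) + h (t *\<^sub>R y)" by (rule sub)
  also have "\<dots> = (1 - t) * h x + t * h y" using t by (simp add: hom)
  finally show "h ((1 - t) *\<^sub>R x + t *\<^sub>R y) \<le> (1 - t) * h x + t * h y" .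
qed auto

lemma sublinear_support_point:
  fixes h :: "'a::euclidean_space \<Rightarrow> real"
  assumes sub: "\<And>x y. h (x + y) \<le> h x + h y"
    and hom: "\<And>t x. t \<ge> 0 \<Longrightarrow> h (t *\<^sub>R x) = t * h x"
  obtains \<xi> where "\<And>w. \<xi> \<bullet> w \<le> h w" "\<xi> \<bullet> w0 = h w0"
proof -
  have h0: "h 0 = 0" using hom[of 0 0] by simp
  define S where "S = {(w - w0, t - h w0) | w t. h w < t}"
  have cvx: "convex_on UNIV h" by (rule sublinear_convex_on[OF sub hom])
  have "convex S"
    unfolding S_def convex_def
  proof (clarify)
    fix w1 t1 w2 t2 :: _ and u v :: real
    assume a: "h w1 < t1" "h w2 < t2" "0 \<le> u" "0 \<le> v" "u + v = 1"
    have u: "u = 1 - v" using a(5) by simp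
    have "h (u *\<^sub>R w1 + v *\<^sub>R w2) \<le> u * h w1 + v * h w2"
      using convex_onD[OF cvx, of v w1 w2] a unfolding u by simp
    also have "\<dots> < u * t1 + v * t2"
    proof -
      have "u * h w1 \<le> u * t1" "v * h w2 \<le> v * t2" using a by (auto intro: mult_left_mono)
      moreover have "u > 0 \<or> v > 0" using a by auto
      ultimately show ?thesis using a by (auto intro: add_strict_right_mono add_strict_left_mono
            mult_strict_left_mono add_le_less_mono add_less_le_mono)
    qed
    finally have "h (u *\<^sub>R w1 + v *\<^sub>R w2) < u * t1 + v * t2" .
    moreover have "u *\<^sub>R (w1 - w0, t1 - h w0) + v *\<^sub>R (w2 - w0, t2 - h w0)
        = ((u *\<^sub>R w1 + v *\<^sub>R w2) - w0, (u * t1 + v * t2) - h w0)"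
      using a(5) by (simp add: algebra_simps) (metis scaleR_add_left scaleR_one add_diff_cancel_left' mult.commute add.commute mult_1 distrib_right)
    ultimately show "\<exists>w t. u *\<^sub>R (w1 - w0, t1 - h w0) + v *\<^sub>R (w2 - w0, t2 - h w0) = (w - w0, t - h w0) \<and> h w < t"
      by blast
  qed
  moreover have "0 \<notin> S" unfolding S_def by (auto simp: zero_prod_def)
  ultimately obtain a where a: "a \<noteq> 0" "\<forall>x\<in>S. 0 \<le> a \<bullet> x"
    using separating_hyperplane_set_0 by blast
  obtain a1 c where ac: "a = (a1, c)" by (cases a)
  have key: "0 \<le> a1 \<bullet> (w - w0) + c * (t - h w0)" if "h w < t" for w t
    using a(2) that unfolding S_def ac by (auto simp: inner_Pair)
  have "c \<ge> 0"
  proof (rule ccontr)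
    assume "\<not> c \<ge> 0"
    define t where "t = h w0 + 1 + \<bar>a1 \<bullet> (w0 - w0)\<bar> / (- c)"
    have "0 \<le> c * (t - h w0)" using key[of w0 t] unfolding t_def
      using \<open>\<not> c \<ge> 0\<close> by (simp add: divide_nonneg_pos)
    moreover have "t - h w0 > 0" unfolding t_def using \<open>\<not> c \<ge> 0\<close> by (simp add: divide_nonneg_pos)
    ultimately show False using \<open>\<not> c \<ge> 0\<close> by (simp add: zero_le_mult_iff)
  qed
  have "c \<noteq> 0"
  proof
    assume "c = 0"
    then have "a1 \<noteq> 0" using a(1) ac by (auto simp: zero_prod_def)
    have "0 \<le> a1 \<bullet> ((w0 - a1) - w0)" using key[of "w0 - a1" "h (w0 - a1) + 1"] \<open>c = 0\<close> by simp
    then have "a1 \<bullet> a1 \<le> 0" by simp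
    then show False using \<open>a1 \<noteq> 0\<close> inner_gt_zero_iff[of a1] by linarith
  qed
  with \<open>c \<ge> 0\<close> have cpos: "c > 0" by simp
  define \<xi> where "\<xi> = - (1 / c) *\<^sub>R a1"
  have ineq: "\<xi> \<bullet> (w - w0) \<le> h w - h w0" for w
  proof (rule field_le_epsilon)
    fix e :: real assume "e > 0"
    have "0 \<le> a1 \<bullet> (w - w0) + c * (h w + e - h w0)" using key[of w "h w + e"] \<open>e > 0\<close> by simp
    then have "0 \<le> (1 / c) * (a1 \<bullet> (w - w0) + c * (h w + e - h w0))" using cpos by simp
    then show "\<xi> \<bullet> (w - w0) \<le> h w - h w0 + e"
      unfolding \<xi>_def using cpos by (simp add: field_simps)
  qed
  have e1: "\<xi> \<bullet> w0 \<ge> h w0" using ineq[of 0] h0 by simp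
  have e2: "\<xi> \<bullet> w0 \<le> h w0" using ineq[of "2 *\<^sub>R w0"] hom[of 2 w0] by (simp add: algebra_simps inner_diff_right)
  have "\<xi> \<bullet> w \<le> h w" for w
    using ineq[of w] e1 e2 by (simp add: inner_diff_right)
  with e1 e2 that show ?thesis by (meson order_antisym)
qed

lemma sublinear_rep:
  fixes h :: "'a::euclidean_space \<Rightarrow> real"
  assumes sub: "\<And>x y. h (x + y) \<le> h x + h y"
    and hom: "\<And>t x. t \<ge> 0 \<Longrightarrow> h (t *\<^sub>R x) = t * h x"
  shows "\<exists>Q. convex_body Q \<and> (\<forall>w. support_fun Q w = h w)"
proof -
  define Q where "Q = {\<xi>. \<forall>w. \<xi> \<bullet> w \<le> h w}"
  have cl: "closed Q"
  proof -
    have "Q = (\<Inter>w. {\<xi>. w \<bullet> \<xi> \<le> h w})" unfolding Q_def by (auto simp: inner_commute)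
    then show ?thesis by (auto intro!: closed_INT closed_halfspace_le)
  qed
  have bd: "bounded Q"
  proof -
    have "norm \<xi> \<le> (\<Sum>b\<in>Basis. \<bar>h b\<bar> + \<bar>h (-b)\<bar>)" if "\<xi> \<in> Q" for \<xi>
    proof -
      have "\<bar>\<xi> \<bullet> b\<bar> \<le> \<bar>h b\<bar> + \<bar>h (-b)\<bar>" for b
        using that unfolding Q_def
        by (smt (verit, ccfv_SIG) inner_minus_right mem_Collect_eq)
      then have "(\<Sum>b\<in>Basis. \<bar>\<xi> \<bullet> b\<bar>) \<le> (\<Sum>b\<in>Basis. \<bar>h b\<bar> + \<bar>h (-b)\<bar>)"
        by (intro sum_mono)
      then show ?thesis using norm_le_l1[of \<xi>] by linarith
    qed
    then show ?thesis unfolding bounded_iff by blast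
  qed
  have cv: "convex Q"
    unfolding Q_def convex_def
  proof clarify
    fix x y :: 'a and u v :: real and w
    assume a: "\<forall>w. x \<bullet> w \<le> h w" "\<forall>w. y \<bullet> w \<le> h w" "0 \<le> u" "0 \<le> v" "u + v = 1"
    have "(u *\<^sub>R x + v *\<^sub>R y) \<bullet> w = u * (x \<bullet> w) + v * (y \<bullet> w)" by (simp add: inner_add_left)
    also have "\<dots> \<le> u * h w + v * h w" using a by (intro add_mono mult_left_mono) auto
    also have "\<dots> = h w" using a(5) by (simp flip: distrib_right)
    finally show "(u *\<^sub>R x + v *\<^sub>R y) \<bullet> w \<le> h w" .
  qed
  have att: "\<exists>\<xi>\<in>Q. \<xi> \<bullet> w0 = h w0" for w0
    using sublinear_support_point[OF sub hom, of w0] unfolding Q_def by blast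
  then have ne: "Q \<noteq> {}" by blast
  have "support_fun Q w = h w" for w
  proof (rule order_antisym)
    show "support_fun Q w \<le> h w" using ne by (intro support_fun_least) (auto simp: Q_def)
    obtain \<xi> where "\<xi> \<in> Q" "\<xi> \<bullet> w = h w" using att by blast
    then show "h w \<le> support_fun Q w"
      using support_fun_upper[of Q \<xi> w] cl bd by (auto simp: compact_eq_bounded_closed)
  qed
  moreover have "convex_body Q" unfolding convex_body_def using cl bd cv ne
    by (auto simp: compact_eq_bounded_closed)
  ultimately show ?thesis by blast
qed


section \<open>Minkowski sums\<close>

lemma minkowski_sum_commute: "minkowski_sum A B = minkowski_sum B A"
  unfolding minkowski_sum_def by (auto; metis add.commute)

lemma minkowski_sum_Un: "minkowski_sum K (X \<union> Y) = minkowski_sum K X \<union> minkowski_sum K Y"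
  unfolding minkowski_sum_def by blast

lemma minkowski_sum_assoc:
  "minkowski_sum (minkowski_sum A B) C = minkowski_sum A (minkowski_sum B C)"
  unfolding minkowski_sum_def by (auto simp: add.assoc) (metis add.assoc)+

lemma minkowski_sum_singleton: "minkowski_sum K {x} = (\<lambda>k. k + x) ` K"
  unfolding minkowski_sum_def by auto

lemma minkowski_sum_zero: "minkowski_sum K {0} = K"
  unfolding minkowski_sum_def by auto

lemma minkowski_sum_mono: "A \<subseteq> A' \<Longrightarrow> B \<subseteq> B' \<Longrightarrow> minkowski_sum A B \<subseteq> minkowski_sum A' B'"
  unfolding minkowski_sum_def by blast

lemma convex_body_minkowski_sum:
  assumes "convex_body A" "convex_body B"
  shows "convex_body (minkowski_sum A B)"
proof -
  have "minkowski_sum A B = (\<Union>x\<in>A. \<Union>y\<in>B. {x + y})" unfolding minkowski_sum_def by auto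
  then show ?thesis using assms compact_sums'[of A B] convex_sums[of A B] unfolding convex_body_def
    by (auto simp: minkowski_sum_def)
qed

lemma convex_body_translate:
  assumes "convex_body K" shows "convex_body ((\<lambda>k. k + x) ` K)"
  using convex_body_minkowski_sum[OF assms, of "{x}"]
  by (simp add: minkowski_sum_singleton convex_body_def)

lemma convex_body_scale:
  assumes "convex_body K" shows "convex_body ((\<lambda>k. t *\<^sub>R k) ` K)"
  using assms unfolding convex_body_def
  by (auto intro!: compact_scaling convex_scaling simp del: image_is_empty)

lemma convex_body_linear_image:
  assumes "convex_body K" "linear f" shows "convex_body (f ` K)"
  using assms unfolding convex_body_def
  by (auto intro!: compact_continuous_image convex_linear_image linear_continuous_on
      simp: linear_conv_bounded_linear[symmetric])

lemma convex_body_segment: "convex_body (closed_segment a b)"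
  unfolding convex_body_def by auto

lemma support_fun_minkowski_sum:
  assumes "convex_body A" "convex_body B"
  shows "support_fun (minkowski_sum A B) w = support_fun A w + support_fun B w"
proof (rule order_antisym)
  have cA: "compact A" "A \<noteq> {}" and cB: "compact B" "B \<noteq> {}" using assms by (auto simp: convex_body_def)
  show "support_fun (minkowski_sum A B) w \<le> support_fun A w + support_fun B w"
  proof (rule support_fun_least)
    show "minkowski_sum A B \<noteq> {}" using cA cB unfolding minkowski_sum_def by auto
    fix \<xi> assume "\<xi> \<in> minkowski_sum A B"
    then obtain a b where "\<xi> = a + b" "a \<in> A" "b \<in> B" unfolding minkowski_sum_def by auto
    then show "\<xi> \<bullet> w \<le> support_fun A w + support_fun B w"
      using support_fun_upper[OF cA(1), of a w] support_fun_upper[OF cB(1), of b w]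
      by (simp add: inner_add_left)
  qed
  obtain a where a: "a \<in> A" "support_fun A w = a \<bullet> w" using support_fun_attained[OF cA] by blast
  obtain b where b: "b \<in> B" "support_fun B w = b \<bullet> w" using support_fun_attained[OF cB] by blast
  have "a + b \<in> minkowski_sum A B" using a b unfolding minkowski_sum_def by auto
  then have "(a + b) \<bullet> w \<le> support_fun (minkowski_sum A B) w"
    using convex_body_minkowski_sum[OF assms] by (intro support_fun_upper) (auto simp: convex_body_def)
  then show "support_fun A w + support_fun B w \<le> support_fun (minkowski_sum A B) w"
    using a b by (simp add: inner_add_left)
qed

lemma mem_minkowski: "x \<in> minkowski_sum A B \<longleftrightarrow> (\<exists>a\<in>A. \<exists>b\<in>B. x = a + b)"
  unfolding minkowski_sum_def by blast

lemma mink_swap: "minkowski_sum K (minkowski_sum A B) = minkowski_sum (minkowski_sum K B) A"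
proof (rule set_eqI, rule iffI)
  fix x assume "x \<in> minkowski_sum K (minkowski_sum A B)"
  then obtain k y where ky: "k \<in> K" "y \<in> minkowski_sum A B" "x = k + y" by (auto simp: mem_minkowski)
  then obtain a b where ab: "a \<in> A" "b \<in> B" "y = a + b" by (auto simp: mem_minkowski)
  have "k + b \<in> minkowski_sum K B" using ky ab by (auto simp: mem_minkowski)
  moreover have "x = (k + b) + a" using ky ab by (simp add: add_ac)
  ultimately show "x \<in> minkowski_sum (minkowski_sum K B) A" using ab(1)
    unfolding mem_minkowski[of x "minkowski_sum K B" A] by blast
next
  fix x assume "x \<in> minkowski_sum (minkowski_sum K B) A"
  then obtain y a where ky: "y \<in> minkowski_sum K B" "a \<in> A" "x = y + a" by (auto simp: mem_minkowski)
  then obtain k b where ab: "k \<in> K" "b \<in> B" "y = k + b" by (auto simp: mem_minkowski)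
  have "a + b \<in> minkowski_sum A B" using ky ab by (auto simp: mem_minkowski)
  moreover have "x = k + (a + b)" using ky ab by (simp add: add_ac)
  ultimately show "x \<in> minkowski_sum K (minkowski_sum A B)" using ab(1)
    unfolding mem_minkowski[of x K "minkowski_sum A B"] by blast
qed

lemma cut_point:
  fixes X Y :: "'a::real_normed_vector set"
  assumes "closed X" "closed Y" "convex (X \<union> Y)" "x \<in> X" "y \<in> Y"
  shows "\<exists>z\<in>closed_segment x y. z \<in> X \<and> z \<in> Y"
proof (rule ccontr)
  assume nz: "\<not> ?thesis"
  have sub: "closed_segment x y \<subseteq> X \<union> Y"
    using assms by (intro closed_segment_subset) auto
  have "X \<inter> closed_segment x y = {} \<or> Y \<inter> closed_segment x y = {}"
    using connected_closedD[OF connected_segment[of x y], of X Y] sub nz assms(1,2) by blast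
  then show False using assms(4,5) by auto
qed

lemma convex_body_Int:
  fixes X Y :: "'a::euclidean_space set"
  assumes "convex_body X" "convex_body Y" "convex (X \<union> Y)"
  shows "convex_body (X \<inter> Y)"
proof -
  obtain x y where "x \<in> X" "y \<in> Y" using assms by (auto simp: convex_body_def)
  then obtain z where "z \<in> X" "z \<in> Y"
    using cut_point[of X Y x y] assms by (auto simp: convex_body_def compact_imp_closed)
  then show ?thesis using assms
    by (auto simp: convex_body_def compact_Int convex_Int)
qed

lemma linear_image_Int:
  fixes X Y :: "'a::real_normed_vector set"
  assumes "linear f" "closed X" "closed Y" "convex (X \<union> Y)"
  shows "f ` (X \<inter> Y) = f ` X \<inter> f ` Y"
proof
  show "f ` (X \<inter> Y) \<subseteq> f ` X \<inter> f ` Y" by auto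
  show "f ` X \<inter> f ` Y \<subseteq> f ` (X \<inter> Y)"
  proof
    fix v assume "v \<in> f ` X \<inter> f ` Y"
    then obtain a b where ab: "a \<in> X" "b \<in> Y" "f a = v" "f b = v" by auto
    obtain z where z: "z \<in> closed_segment a b" "z \<in> X" "z \<in> Y"
      using cut_point[OF assms(2-4) ab(1,2)] by blast
    then obtain u where u: "z = (1 - u) *\<^sub>R a + u *\<^sub>R b" unfolding closed_segment_def by auto
    have "f z = (1 - u) *\<^sub>R f a + u *\<^sub>R f b"
      unfolding u using assms(1) by (simp add: linear_add linear_cmul)
    also have "\<dots> = v" using ab by (simp add: algebra_simps)
    finally show "v \<in> f ` (X \<inter> Y)" using z by auto
  qed
qed

lemma minkowski_sum_Int:
  fixes K X Y :: "'a::euclidean_space set"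
  assumes "convex K" "compact K" "compact X" "compact Y" "convex (X \<union> Y)"
  shows "minkowski_sum K X \<inter> minkowski_sum K Y = minkowski_sum K (X \<inter> Y)"
proof -
  define f where "f = (\<lambda>p::'a \<times> 'a. fst p + snd p)"
  have lin: "linear f" unfolding f_def by (intro linear_compose_add linear_fst linear_snd)
  have im: "f ` (K \<times> Z) = minkowski_sum K Z" for Z
    unfolding f_def minkowski_sum_def by force
  have "convex ((K \<times> X) \<union> (K \<times> Y))"
    using assms by (simp add: Sigma_Un_distrib2[symmetric] convex_Times)
  then have "f ` ((K \<times> X) \<inter> (K \<times> Y)) = f ` (K \<times> X) \<inter> f ` (K \<times> Y)"
    using assms by (intro linear_image_Int lin compact_imp_closed compact_Times)
  moreover have "(K \<times> X) \<inter> (K \<times> Y) = K \<times> (X \<inter> Y)" by auto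
  ultimately show ?thesis by (simp add: im)
qed

section \<open>Hausdorff distance\<close>

lemma hd_upper:
  fixes A B :: "'a::euclidean_space set"
  assumes "compact A" "B \<noteq> {}" "x \<in> A"
  shows "infdist x B \<le> hausdorff_dist A B"
proof -
  have "bounded ((\<lambda>a. infdist a B) ` A)"
    by (intro compact_imp_bounded compact_continuous_image assms continuous_at_imp_continuous_on
        ballI continuous_infdist continuous_ident)
  then have "bdd_above ((\<lambda>a. infdist a B) ` A)" by (rule bounded_imp_bdd_above)
  then have "infdist x B \<le> (SUP a\<in>A. infdist a B)" by (rule cSUP_upper[OF assms(3)])
  then show ?thesis unfolding hausdorff_dist_def by simp
qed

lemma hd_upper':
  fixes A B :: "'a::euclidean_space set"
  assumes "compact B" "A \<noteq> {}" "y \<in> B"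
  shows "infdist y A \<le> hausdorff_dist A B"
proof -
  have "bounded ((\<lambda>a. infdist a A) ` B)"
    by (intro compact_imp_bounded compact_continuous_image assms continuous_at_imp_continuous_on
        ballI continuous_infdist continuous_ident)
  then have "bdd_above ((\<lambda>a. infdist a A) ` B)" by (rule bounded_imp_bdd_above)
  then have "infdist y A \<le> (SUP a\<in>B. infdist a A)" by (rule cSUP_upper[OF assms(3)])
  then show ?thesis unfolding hausdorff_dist_def by simp
qed

lemma hd_least:
  fixes A B :: "'a::euclidean_space set"
  assumes "A \<noteq> {}" "B \<noteq> {}" "\<And>x. x \<in> A \<Longrightarrow> infdist x B \<le> e" "\<And>y. y \<in> B \<Longrightarrow> infdist y A \<le> e"
  shows "hausdorff_dist A B \<le> e"
  unfolding hausdorff_dist_def using assms by (auto intro!: cSUP_least)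

lemma hd_nonneg:
  fixes A B :: "'a::euclidean_space set"
  assumes "compact A" "A \<noteq> {}" "B \<noteq> {}"
  shows "0 \<le> hausdorff_dist A B"
  using hd_upper[OF assms(1,3)] assms(2) infdist_nonneg by (metis all_not_in_conv order_trans)

lemma hd_near:
  fixes A B :: "'a::euclidean_space set"
  assumes "compact A" "compact B" "B \<noteq> {}" "x \<in> A"
  obtains y where "y \<in> B" "dist x y \<le> hausdorff_dist A B"
proof -
  obtain y where "y \<in> B" "infdist x B = dist x y"
    using infdist_attains_inf[of B x] assms compact_imp_closed by blast
  with hd_upper[OF assms(1,3,4)] that show ?thesis by auto
qed

lemma hd_near':
  fixes A B :: "'a::euclidean_space set"
  assumes "compact A" "compact B" "A \<noteq> {}" "y \<in> B"
  obtains x where "x \<in> A" "dist y x \<le> hausdorff_dist A B"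
proof -
  obtain x where "x \<in> A" "infdist y A = dist y x"
    using infdist_attains_inf[of A y] assms compact_imp_closed by blast
  with hd_upper'[OF assms(2,3,4)] that show ?thesis by auto
qed

lemma infdist_le_dist_mem: "y \<in> B \<Longrightarrow> infdist x B \<le> d \<Longrightarrow> dist x y \<le> d \<Longrightarrow> True" by simp

lemma hd_minkowski_sum_le:
  fixes A B X Y :: "'a::euclidean_space set"
  assumes "compact A" "compact B" "compact X" "compact Y"
    "A \<noteq> {}" "B \<noteq> {}" "X \<noteq> {}" "Y \<noteq> {}"
  shows "hausdorff_dist (minkowski_sum A X) (minkowski_sum B Y)
           \<le> hausdorff_dist A B + hausdorff_dist X Y"
proof (rule hd_least)
  show "minkowski_sum A X \<noteq> {}" "minkowski_sum B Y \<noteq> {}"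
    using assms unfolding minkowski_sum_def by auto
  fix z assume "z \<in> minkowski_sum A X"
  then obtain a x where z: "z = a + x" "a \<in> A" "x \<in> X" unfolding minkowski_sum_def by auto
  obtain b where b: "b \<in> B" "dist a b \<le> hausdorff_dist A B" using hd_near[OF assms(1,2,6) z(2)] by blast
  obtain y where y: "y \<in> Y" "dist x y \<le> hausdorff_dist X Y" using hd_near[OF assms(3,4,8) z(3)] by blast
  have "b + y \<in> minkowski_sum B Y" using b y unfolding minkowski_sum_def by auto
  then have "infdist z (minkowski_sum B Y) \<le> dist z (b + y)" by (rule infdist_le)
  also have "\<dots> \<le> dist a b + dist x y" unfolding z dist_norm
    by (metis add_diff_add norm_triangle_ineq)
  finally show "infdist z (minkowski_sum B Y) \<le> hausdorff_dist A B + hausdorff_dist X Y"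
    using b y by linarith
next
  fix z assume "z \<in> minkowski_sum B Y"
  then obtain b y where z: "z = b + y" "b \<in> B" "y \<in> Y" unfolding minkowski_sum_def by auto
  obtain a where a: "a \<in> A" "dist b a \<le> hausdorff_dist A B" using hd_near'[OF assms(1,2,5) z(2)] by blast
  obtain x where x: "x \<in> X" "dist y x \<le> hausdorff_dist X Y" using hd_near'[OF assms(3,4,7) z(3)] by blast
  have "a + x \<in> minkowski_sum A X" using a x unfolding minkowski_sum_def by auto
  then have "infdist z (minkowski_sum A X) \<le> dist z (a + x)" by (rule infdist_le)
  also have "\<dots> \<le> dist b a + dist y x" unfolding z dist_norm
    by (metis add_diff_add norm_triangle_ineq)
  finally show "infdist z (minkowski_sum A X) \<le> hausdorff_dist A B + hausdorff_dist X Y"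
    using a x by linarith
qed

lemma hd_self:
  fixes A :: "'a::euclidean_space set"
  assumes "compact A" "A \<noteq> {}"
  shows "hausdorff_dist A A = 0"
proof -
  have "hausdorff_dist A A \<le> 0" using assms by (intro hd_least) (auto simp: infdist_zero)
  then show ?thesis using hd_nonneg[OF assms(1,2,2)] by linarith
qed

lemma hd_point:
  fixes A :: "'a::euclidean_space set"
  assumes "A \<noteq> {}" "\<And>a. a \<in> A \<Longrightarrow> dist a p \<le> r"
  shows "hausdorff_dist A {p} \<le> r"
proof (rule hd_least)
  fix x assume "x \<in> A" then show "infdist x {p} \<le> r" using assms by simp
next
  fix y assume "y \<in> {p}"
  then have "y = p" by simp
  obtain a where "a \<in> A" using assms by auto
  then have "infdist p A \<le> dist p a" by (rule infdist_le)
  then show "infdist y A \<le> r" using assms(2)[OF \<open>a \<in> A\<close>] \<open>y = p\<close> by (simp add: dist_commute)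
qed (use assms in auto)


definition sc :: "real \<Rightarrow> 'a::real_vector set \<Rightarrow> 'a set" where
  "sc t A = (\<lambda>k. t *\<^sub>R k) ` A"

lemma image_minkowski_additive:
  assumes add: "\<And>a b. f (a + b) = f a + f b"
  shows "f ` (minkowski_sum A B) = minkowski_sum (f ` A) (f ` B)"
proof (rule set_eqI, rule iffI)
  fix x assume "x \<in> f ` (minkowski_sum A B)"
  then obtain y where y: "y \<in> minkowski_sum A B" "x = f y" by blast
  then obtain a b where ab: "a \<in> A" "b \<in> B" "y = a + b" unfolding mem_minkowski by blast
  have "x = f a + f b" using y ab add by simp
  then show "x \<in> minkowski_sum (f ` A) (f ` B)" using ab
    unfolding mem_minkowski[of x "f ` A" "f ` B"] by blast
next
  fix x assume "x \<in> minkowski_sum (f ` A) (f ` B)"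
  then obtain a b where ab: "a \<in> A" "b \<in> B" "x = f a + f b"
    unfolding mem_minkowski[of x "f ` A" "f ` B"] by blast
  then have "x = f (a + b)" using add by simp
  moreover have "a + b \<in> minkowski_sum A B" using ab unfolding mem_minkowski by blast
  ultimately show "x \<in> f ` (minkowski_sum A B)" by blast
qed

lemma sc_minkowski: "sc t (minkowski_sum A B) = minkowski_sum (sc t A) (sc t B)"
  unfolding sc_def by (rule image_minkowski_additive) (simp add: scaleR_add_right)

lemma sc_sc: "sc t (sc s A) = sc (t * s) A"
  unfolding sc_def by (auto simp: image_image)

lemma sc_1[simp]: "sc 1 A = A" unfolding sc_def by simp

lemma sc_linear: "linear f \<Longrightarrow> sc t (f ` A) = f ` (sc t A)"
  unfolding sc_def image_image by (simp add: linear_cmul)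

lemma minkowski_linear: "linear f \<Longrightarrow> minkowski_sum (f ` A) (f ` B) = f ` (minkowski_sum A B)"
  by (rule image_minkowski_additive[symmetric]) (simp add: linear_add)

lemma convex_body_sc: "convex_body K \<Longrightarrow> convex_body (sc t K)"
  unfolding sc_def by (rule convex_body_scale)

lemma hd_sc_zero:
  fixes K :: "'a::euclidean_space set"
  assumes "convex_body K"
  obtains R where "\<And>t. t \<ge> 0 \<Longrightarrow> hausdorff_dist (sc t K) {0} \<le> t * R"
proof -
  have "bounded K" using assms by (simp add: convex_body_def compact_imp_bounded)
  then obtain R where R: "\<And>k. k \<in> K \<Longrightarrow> norm k \<le> R"
    unfolding bounded_iff by blast
  have "hausdorff_dist (sc t K) {0} \<le> t * R" if "t \<ge> 0" for t
  proof (rule hd_point)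
    show "sc t K \<noteq> {}" using assms unfolding sc_def convex_body_def by auto
    fix a assume "a \<in> sc t K"
    then obtain k where "k \<in> K" "a = t *\<^sub>R k" unfolding sc_def by auto
    then show "dist a 0 \<le> t * R" using R[of k] that by (simp add: mult_left_mono)
  qed
  then show ?thesis using that by blast
qed

locale mval =
  fixes \<mu> :: "complex set \<Rightarrow> real"
  assumes val: "real_valuation \<mu>"
    and cont: "hausdorff_continuous \<mu> (\<lambda>a b. dist a b)"
    and tinv: "translation_invariant \<mu>"
    and mono: "monotone_on_bodies \<mu>"
    and hom: "homogeneous_deg1 \<mu>"
begin

lemma mu_point_sum: "convex_body K \<Longrightarrow> \<mu> (minkowski_sum K {p}) = \<mu> K"
  using tinv unfolding translation_invariant_def by (simp add: minkowski_sum_singleton)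

lemma mu_sc: "convex_body K \<Longrightarrow> t \<ge> 0 \<Longrightarrow> \<mu> (sc t K) = t * \<mu> K"
  using hom unfolding homogeneous_deg1_def sc_def by simp

lemma mu_point: "\<mu> {p} = 0"
proof -
  have "convex_body {0::complex}" by (simp add: convex_body_def)
  then have "\<mu> (sc 0 {0}) = 0" using mu_sc[of "{0}" 0] by simp
  then have "\<mu> {0} = 0" by (simp add: sc_def)
  then show ?thesis using mu_point_sum[of "{0}" p] \<open>convex_body {0}\<close>
    by (simp add: minkowski_sum_singleton)
qed

lemma mu_val: "convex_body K \<Longrightarrow> convex_body L \<Longrightarrow> convex_body (K \<union> L) \<Longrightarrow>
    \<mu> (K \<union> L) + \<mu> (K \<inter> L) = \<mu> K + \<mu> L"
  using val unfolding real_valuation_def by blast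

lemma mu_mono: "convex_body K \<Longrightarrow> convex_body L \<Longrightarrow> K \<subseteq> L \<Longrightarrow> \<mu> K \<le> \<mu> L"
  using mono unfolding monotone_on_bodies_def by blast

lemma mu_cont:
  assumes "\<And>n. convex_body (Ks n)" "convex_body K" "(\<lambda>n. hausdorff_dist (Ks n) K) \<longlonglongrightarrow> 0"
  shows "(\<lambda>n. \<mu> (Ks n)) \<longlonglongrightarrow> \<mu> K"
proof -
  have "(\<lambda>n. dist (\<mu> (Ks n)) (\<mu> K)) \<longlonglongrightarrow> 0"
    using cont assms unfolding hausdorff_continuous_def by blast
  then show ?thesis unfolding tendsto_dist_iff[of _ "\<mu> K"] .
qed

definition additive where
  "additive B \<longleftrightarrow> convex_body B \<and> (\<forall>K. convex_body K \<longrightarrow> \<mu> (minkowski_sum K B) = \<mu> K + \<mu> B)"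

lemma additive_point: "additive {p}"
proof -
  have "convex_body {p}" by (simp add: convex_body_def)
  then show ?thesis unfolding additive_def using mu_point_sum mu_point by simp
qed

lemma additive_translate:
  assumes "additive B" shows "additive (minkowski_sum {p} B)"
proof -
  have B: "convex_body B" using assms by (simp add: additive_def)
  have b: "convex_body (minkowski_sum {p} B)" using B convex_body_minkowski_sum[of "{p}" B]
    by (simp add: convex_body_def)
  have "\<mu> (minkowski_sum K (minkowski_sum {p} B)) = \<mu> K + \<mu> (minkowski_sum {p} B)"
    if K: "convex_body K" for K
  proof -
    have "minkowski_sum K (minkowski_sum {p} B) = minkowski_sum (minkowski_sum K B) {p}"
      by (rule mink_swap)
    moreover have "minkowski_sum {p} B = minkowski_sum B {p}" by (rule minkowski_sum_commute)
    moreover have KB: "convex_body (minkowski_sum K B)" using K B by (rule convex_body_minkowski_sum)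
    moreover have "\<mu> (minkowski_sum K B) = \<mu> K + \<mu> B" using assms K unfolding additive_def by blast
    moreover have "\<mu> (minkowski_sum B {p}) = \<mu> B" using mu_point_sum[OF B] .
    ultimately show ?thesis using mu_point_sum[OF KB, of p] by simp
  qed
  then show ?thesis using b by (simp add: additive_def)
qed


lemma additive_step:
  assumes X: "convex_body X"
    and E: "\<And>n. additive (E n)"
    and U: "\<And>n. sc (real (Suc n)) X = sc (real n) X \<union> minkowski_sum (E n) X"
    and I: "\<And>n. sc (real n) X \<inter> minkowski_sum (E n) X = E n"
  shows "additive X"
proof -
  have "\<mu> (minkowski_sum K X) = \<mu> K + \<mu> X" if K: "convex_body K" for K
  proof -
    define g where "g n = \<mu> (minkowski_sum K (sc (real n) X))" for n
    have En: "convex_body (E n)" for n using E by (simp add: additive_def)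
    have scX: "convex_body (sc t X)" for t by (rule convex_body_sc[OF X])
    have step: "g (Suc n) = g n + \<mu> (minkowski_sum K X) - \<mu> K" for n
    proof -
      have un: "minkowski_sum K (sc (real (Suc n)) X)
          = minkowski_sum K (sc (real n) X) \<union> minkowski_sum K (minkowski_sum (E n) X)"
        unfolding U[of n] by (rule minkowski_sum_Un)
      have "minkowski_sum K (sc (real n) X) \<inter> minkowski_sum K (minkowski_sum (E n) X)
          = minkowski_sum K (sc (real n) X \<inter> minkowski_sum (E n) X)"
        using K scX[of "real n"] scX[of "real (Suc n)"] convex_body_minkowski_sum[OF En X]
        by (intro minkowski_sum_Int) (auto simp: convex_body_def U[symmetric])
      then have int: "minkowski_sum K (sc (real n) X) \<inter> minkowski_sum K (minkowski_sum (E n) X)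
          = minkowski_sum K (E n)" by (simp add: I)
      have b1: "convex_body (minkowski_sum K (sc (real n) X))"
        using K scX by (rule convex_body_minkowski_sum)
      have b2: "convex_body (minkowski_sum K (minkowski_sum (E n) X))"
        using K convex_body_minkowski_sum[OF En X] by (rule convex_body_minkowski_sum)
      have b3: "convex_body (minkowski_sum K (sc (real (Suc n)) X))"
        using K scX by (rule convex_body_minkowski_sum)
      have v: "g (Suc n) + \<mu> (minkowski_sum K (E n))
           = g n + \<mu> (minkowski_sum K (minkowski_sum (E n) X))"
        using mu_val[OF b1 b2] b3 unfolding g_def un int by simp
      have "minkowski_sum K (minkowski_sum (E n) X) = minkowski_sum (minkowski_sum K X) (E n)"
        by (rule mink_swap)
      then have "\<mu> (minkowski_sum K (minkowski_sum (E n) X)) = \<mu> (minkowski_sum K X) + \<mu> (E n)"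
        using E[of n] convex_body_minkowski_sum[OF K X] by (simp add: additive_def)
      moreover have "\<mu> (minkowski_sum K (E n)) = \<mu> K + \<mu> (E n)" using E[of n] K by (simp add: additive_def)
      ultimately show ?thesis using v by simp
    qed
    have X0: "sc 0 X = {0}" using X unfolding sc_def convex_body_def by auto
    have g0: "g 0 = \<mu> K" unfolding g_def using X0 by (simp add: minkowski_sum_zero)
    have gn: "g n = \<mu> K + real n * (\<mu> (minkowski_sum K X) - \<mu> K)" for n
      by (induction n) (simp_all add: g0 step algebra_simps)
    define Ks where "Ks n = minkowski_sum (sc (1 / real (Suc n)) K) X" for n
    have KsB: "convex_body (Ks n)" for n unfolding Ks_def
      by (intro convex_body_minkowski_sum convex_body_sc K X)
    have eq: "\<mu> (Ks n) = \<mu> K / real (Suc n) + \<mu> (minkowski_sum K X) - \<mu> K" for n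
    proof -
      have "sc (real (Suc n)) (Ks n) = minkowski_sum K (sc (real (Suc n)) X)"
        unfolding Ks_def sc_minkowski sc_sc by simp
      then have "real (Suc n) * \<mu> (Ks n) = g (Suc n)"
        unfolding g_def using mu_sc[OF KsB[of n], of "real (Suc n)"] by simp
      then show ?thesis unfolding gn by (simp add: field_simps)
    qed
    obtain R where R: "\<And>t. t \<ge> 0 \<Longrightarrow> hausdorff_dist (sc t K) {0} \<le> t * R" using hd_sc_zero[OF K] by blast
    have "(\<lambda>n. hausdorff_dist (Ks n) X) \<longlonglongrightarrow> 0"
    proof (rule tendsto_sandwich[where f="\<lambda>_. 0" and h="\<lambda>n. 1 / real (Suc n) * R"])
      have Xc: "compact X" "X \<noteq> {}" using X by (auto simp: convex_body_def)
      have "hausdorff_dist (Ks n) X = hausdorff_dist (minkowski_sum (sc (1 / real (Suc n)) K) X) (minkowski_sum {0} X)" for n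
        unfolding Ks_def by (simp add: minkowski_sum_commute[of "{0}"] minkowski_sum_zero)
      also have "\<dots> n \<le> hausdorff_dist (sc (1 / real (Suc n)) K) {0} + hausdorff_dist X X" for n
        using convex_body_sc[OF K, of "1 / real (Suc n)"] Xc
        by (intro hd_minkowski_sum_le) (auto simp: convex_body_def)
      finally have hd1: "hausdorff_dist (Ks n) X \<le> hausdorff_dist (sc (1 / real (Suc n)) K) {0}" for n
        using hd_self[OF Xc] by simp
      have "hausdorff_dist (Ks n) X \<le> 1 / real (Suc n) * R" for n
        using hd1[of n] R[of "1 / real (Suc n)"] by simp
      then show "\<forall>\<^sub>F n in sequentially. hausdorff_dist (Ks n) X \<le> 1 / real (Suc n) * R"
        by simp
      have "0 \<le> hausdorff_dist (Ks n) X" for n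
        using KsB[of n] X by (intro hd_nonneg) (auto simp: convex_body_def)
      then show "\<forall>\<^sub>F n in sequentially. 0 \<le> hausdorff_dist (Ks n) X" by simp
      show "(\<lambda>n. 1 / real (Suc n) * R) \<longlonglongrightarrow> 0"
        by (intro tendsto_mult_left_zero LIMSEQ_inverse_real_of_nat[unfolded inverse_eq_divide])
    qed auto
    then have l1: "(\<lambda>n. \<mu> (Ks n)) \<longlonglongrightarrow> \<mu> X" by (rule mu_cont[OF KsB X])
    have l2: "(\<lambda>n. \<mu> K / real (Suc n) + \<mu> (minkowski_sum K X) - \<mu> K) \<longlonglongrightarrow> 0 + \<mu> (minkowski_sum K X) - \<mu> K"
    proof -
      have "(\<lambda>n. \<mu> K * inverse (real (Suc n)) + \<mu> (minkowski_sum K X) - \<mu> K) \<longlonglongrightarrow> \<mu> K * 0 + \<mu> (minkowski_sum K X) - \<mu> K"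
        by (intro tendsto_intros LIMSEQ_inverse_real_of_nat)
      then show ?thesis by (simp add: divide_inverse)
    qed
    have "\<mu> X = \<mu> (minkowski_sum K X) - \<mu> K"
      using LIMSEQ_unique[OF l1] l2 eq by simp
    then show ?thesis by simp
  qed
  then show ?thesis using X by (simp add: additive_def)
qed

end

lemma minkowski_singleton_left: "minkowski_sum {p} B = (\<lambda>b. p + b) ` B"
  unfolding minkowski_sum_def by auto

context mval begin

lemma additive_param:
  fixes f :: "'p::euclidean_space \<Rightarrow> complex" and P L :: "nat \<Rightarrow> 'p set"
  assumes lin: "linear f"
    and PB: "\<And>n. convex_body (P n)"
    and Lc: "\<And>n. compact (L n)"
    and Psc: "\<And>n. sc (real n) (P 1) = P n"
    and PU: "\<And>n. P (Suc n) = P n \<union> minkowski_sum (L n) (P 1)"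
    and PI: "\<And>n. P n \<inter> minkowski_sum (L n) (P 1) = L n"
    and LA: "\<And>n. additive (f ` L n)"
  shows "additive (f ` P 1)"
proof (rule additive_step[where E="\<lambda>n. f ` L n"])
  show "convex_body (f ` P 1)" using PB lin by (rule convex_body_linear_image)
  show "additive (f ` L n)" for n by (rule LA)
  have scX: "sc (real n) (f ` P 1) = f ` P n" for n using sc_linear[OF lin] Psc by simp
  have ms: "minkowski_sum (f ` L n) (f ` P 1) = f ` minkowski_sum (L n) (P 1)" for n
    by (rule minkowski_linear[OF lin])
  show "sc (real (Suc n)) (f ` P 1) = sc (real n) (f ` P 1) \<union> minkowski_sum (f ` L n) (f ` P 1)" for n
    unfolding scX ms PU[of n] by (rule image_Un)
  have cM: "compact (minkowski_sum (L n) (P 1))" for n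
    using compact_sums[OF Lc[of n], of "P 1"] PB[of 1] unfolding convex_body_def minkowski_sum_def by simp
  show "sc (real n) (f ` P 1) \<inter> minkowski_sum (f ` L n) (f ` P 1) = f ` L n" for n
  proof -
    have cv: "convex (P n \<union> minkowski_sum (L n) (P 1))"
      using PB[of "Suc n"] PU[of n] by (simp add: convex_body_def)
    have "f ` P n \<inter> f ` minkowski_sum (L n) (P 1) = f ` (P n \<inter> minkowski_sum (L n) (P 1))"
      using PB[of n] cM[of n] cv
      by (intro linear_image_Int[symmetric] lin) (auto simp: convex_body_def compact_imp_closed)
    then show ?thesis unfolding scX ms PI .
  qed
qed

lemma sc_interval: "(t::real) \<ge> 0 \<Longrightarrow> sc t {0..1} = {0..t}"
  unfolding sc_def
proof (cases "t = 0")
  case False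
  assume t: "t \<ge> 0"
  then have tp: "t > 0" using False by simp
  show "(\<lambda>k. t *\<^sub>R k) ` {0..1} = {0..t}"
  proof (rule set_eqI, rule iffI)
    fix x assume "x \<in> {0..t}"
    then have "x / t \<in> {0..1}" "x = t *\<^sub>R (x / t)" using tp by (auto simp: field_simps)
    then show "x \<in> (\<lambda>k. t *\<^sub>R k) ` {0..1}" by blast
  qed (use tp in \<open>auto simp: mult_le_cancel_left1\<close>)
next
  case True
  have "\<exists>x::real. 0 \<le> x \<and> x \<le> 1" by (rule exI[of _ 0]) simp
  then show "(\<lambda>k. t *\<^sub>R k) ` {0..1} = {0..t}" using True by (auto simp: image_iff)
qed

lemma additive_segment0: "additive (closed_segment 0 (v::complex))"
proof -
  define f where "f = (\<lambda>t::real. t *\<^sub>R v)"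
  have lin: "linear f" unfolding f_def by (intro linear_scaleR_left linear_ident)
  have "additive (f ` ((\<lambda>n. {0..real n}) 1))"
  proof (rule additive_param[OF lin, where L="\<lambda>n. {real n}"])
    show "convex_body {0..real n}" for n by (simp add: convex_body_def)
    show "compact {real n}" for n by simp
    show "sc (real n) {0..real 1} = {0..real n}" for n using sc_interval[of "real n"] by simp
    show "{0..real (Suc n)} = {0..real n} \<union> minkowski_sum {real n} {0..real 1}" for n
      unfolding minkowski_singleton_left by auto
    show "{0..real n} \<inter> minkowski_sum {real n} {0..real 1} = {real n}" for n
      unfolding minkowski_singleton_left by auto
    show "additive (f ` {real n})" for n by (simp add: additive_point)
  qed
  moreover have "f ` {0..1} = closed_segment 0 v"
    unfolding f_def closed_segment_def by (auto simp: image_iff)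
  ultimately show ?thesis by simp
qed

lemma additive_segment: "additive (closed_segment (p::complex) q)"
proof -
  have "closed_segment p q = minkowski_sum {p} (closed_segment 0 (q - p))"
    unfolding minkowski_singleton_left closed_segment_translation[symmetric] by simp
  then show ?thesis using additive_translate[OF additive_segment0] by simp
qed

end

definition Tri :: "real \<Rightarrow> (real \<times> real) set" where
  "Tri c = {p. 0 \<le> fst p \<and> 0 \<le> snd p \<and> fst p + snd p \<le> c}"
definition Lin :: "real \<Rightarrow> (real \<times> real) set" where
  "Lin c = {p. 0 \<le> fst p \<and> 0 \<le> snd p \<and> fst p + snd p = c}"

lemma closed_Tri: "closed (Tri c)"
  unfolding Tri_def by (intro closed_Collect_conj closed_Collect_le continuous_intros)

lemma bounded_Tri: "bounded (Tri c)"
  unfolding bounded_iff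
proof (intro exI ballI)
  fix p assume "p \<in> Tri c"
  then have "norm p \<le> norm (fst p) + norm (snd p)" "norm (fst p) + norm (snd p) \<le> \<bar>c\<bar>"
    using norm_Pair_le[of "fst p" "snd p"] unfolding Tri_def by auto
  then show "norm p \<le> \<bar>c\<bar>" by linarith
qed

lemma convex_body_Tri: "c \<ge> 0 \<Longrightarrow> convex_body (Tri c)"
  unfolding convex_body_def
proof (intro conjI)
  assume "c \<ge> 0"
  then have "(0, 0) \<in> Tri c" unfolding Tri_def by simp
  then show "Tri c \<noteq> {}" by blast
  show "compact (Tri c)" using closed_Tri bounded_Tri by (simp add: compact_eq_bounded_closed)
  show "convex (Tri c)" unfolding Tri_def convex_def
  proof (clarify)
    fix x y :: "real \<times> real" and u v :: real
    assume a: "0 \<le> fst x" "0 \<le> snd x" "fst x + snd x \<le> c" "0 \<le> fst y" "0 \<le> snd y"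
      "fst y + snd y \<le> c" "0 \<le> u" "0 \<le> v" "u + v = 1"
    have "u * fst x + v * fst y + (u * snd x + v * snd y) = u * (fst x + snd x) + v * (fst y + snd y)"
      by (simp add: algebra_simps)
    also have "\<dots> \<le> u * c + v * c" using a by (intro add_mono mult_left_mono) auto
    also have "\<dots> = c" using a(9) by (simp flip: distrib_right)
    finally show "0 \<le> fst (u *\<^sub>R x + v *\<^sub>R y) \<and> 0 \<le> snd (u *\<^sub>R x + v *\<^sub>R y) \<and>
        fst (u *\<^sub>R x + v *\<^sub>R y) + snd (u *\<^sub>R x + v *\<^sub>R y) \<le> c"
      using a by simp
  qed
qed

lemma Lin_segment: "c \<ge> 0 \<Longrightarrow> Lin c = closed_segment (c, 0) (0, c)"
proof (rule set_eqI, rule iffI)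
  assume c: "c \<ge> 0"
  fix p assume "p \<in> Lin c"
  then have p: "0 \<le> fst p" "0 \<le> snd p" "fst p + snd p = c" unfolding Lin_def by auto
  show "p \<in> closed_segment (c, 0) (0, c)"
  proof (cases "c = 0")
    case True then show ?thesis using p by (cases p) auto
  next
    case False
    then have cp: "c > 0" using c by simp
    define u where "u = snd p / c"
    have "p = (1 - u) *\<^sub>R (c, 0) + u *\<^sub>R (0, c)" "0 \<le> u" "u \<le> 1"
      using p cp unfolding u_def by (auto simp: field_simps prod_eq_iff)
    then show ?thesis unfolding closed_segment_def by blast
  qed
next
  fix p assume "p \<in> closed_segment (c, 0) (0, c)"
  then obtain u where "0 \<le> u" "u \<le> 1" "p = (1 - u) *\<^sub>R (c, 0) + u *\<^sub>R (0, c)"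
    unfolding closed_segment_def by blast
  moreover assume "c \<ge> 0"
  ultimately show "p \<in> Lin c" unfolding Lin_def by (auto simp: algebra_simps mult_left_le)
qed

lemma sc_Tri: "t \<ge> 0 \<Longrightarrow> sc t (Tri 1) = Tri t"
proof (rule set_eqI, rule iffI)
  assume t: "t \<ge> 0"
  fix p assume "p \<in> sc t (Tri 1)"
  then obtain q where "q \<in> Tri 1" "p = t *\<^sub>R q" unfolding sc_def by blast
  then show "p \<in> Tri t" using t unfolding Tri_def
    by (auto simp flip: distrib_left intro: mult_left_le)
next
  assume t: "t \<ge> 0"
  fix p assume p: "p \<in> Tri t"
  show "p \<in> sc t (Tri 1)"
  proof (cases "t = 0")
    case True
    then have "p = 0" using p unfolding Tri_def by (cases p) (auto simp: zero_prod_def)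
    moreover have "(0::real\<times>real) \<in> Tri 1" unfolding Tri_def by simp
    ultimately show ?thesis using True unfolding sc_def by (auto intro: image_eqI[of _ _ 0])
  next
    case False
    then have tp: "t > 0" using t by simp
    have "(1 / t) *\<^sub>R p \<in> Tri 1" using p tp unfolding Tri_def
      by (auto simp: field_simps)
    moreover have "p = t *\<^sub>R ((1 / t) *\<^sub>R p)" using tp by simp
    ultimately show ?thesis unfolding sc_def by blast
  qed
qed

lemma mink_Lin_Tri:
  assumes n: "n \<ge> 0"
  shows "minkowski_sum (Lin n) (Tri 1) = {p. 0 \<le> fst p \<and> 0 \<le> snd p \<and> n \<le> fst p + snd p \<and> fst p + snd p \<le> n + 1}"
proof (rule set_eqI, rule iffI)
  fix p assume "p \<in> minkowski_sum (Lin n) (Tri 1)"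
  then obtain e q where "e \<in> Lin n" "q \<in> Tri 1" "p = e + q" unfolding mem_minkowski by blast
  then show "p \<in> {p. 0 \<le> fst p \<and> 0 \<le> snd p \<and> n \<le> fst p + snd p \<and> fst p + snd p \<le> n + 1}"
    unfolding Lin_def Tri_def by auto
next
  fix p assume "p \<in> {p. 0 \<le> fst p \<and> 0 \<le> snd p \<and> n \<le> fst p + snd p \<and> fst p + snd p \<le> n + 1}"
  then have p: "0 \<le> fst p" "0 \<le> snd p" "n \<le> fst p + snd p" "fst p + snd p \<le> n + 1" by auto
  show "p \<in> minkowski_sum (Lin n) (Tri 1)"
  proof (cases "fst p + snd p = 0")
    case True
    then have "n = 0" "p = 0" using p n by (auto simp: prod_eq_iff)
    moreover have "(0::real\<times>real) \<in> Lin 0" "(0::real\<times>real) \<in> Tri 1" unfolding Lin_def Tri_def by auto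
    ultimately show ?thesis unfolding mem_minkowski by (metis add_0)
  next
    case False
    define s where "s = fst p + snd p"
    have sp: "s > 0" using False p unfolding s_def by simp
    define e where "e = (n / s) *\<^sub>R p"
    define q where "q = ((s - n) / s) *\<^sub>R p"
    have "e \<in> Lin n"
    proof -
      have "fst e + snd e = (n / s) * s" unfolding e_def s_def by (simp add: distrib_left)
      also have "\<dots> = n" using sp by simp
      finally show ?thesis unfolding Lin_def using p n sp by (auto simp: e_def)
    qed
    moreover have "q \<in> Tri 1"
    proof -
      have "fst q + snd q = ((s - n) / s) * s" unfolding q_def s_def by (simp add: distrib_left)
      also have "\<dots> = s - n" using sp by simp
      finally have "fst q + snd q \<le> 1" using p unfolding s_def by simp
      moreover have "0 \<le> (s - n) / s" using p sp unfolding s_def by simp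
      moreover have "0 \<le> (s - n) / s * fst p" "0 \<le> (s - n) / s * snd p"
        using calculation(2) p by (simp_all del: times_divide_eq_left divide_le_0_iff zero_le_divide_iff)
      ultimately show ?thesis unfolding Tri_def q_def by simp
    qed
    moreover have "p = e + q" unfolding e_def q_def using sp
      by (simp add: scaleR_add_left[symmetric] field_simps)
    ultimately show ?thesis unfolding mem_minkowski by blast
  qed
qed

lemma Tri_Suc: assumes "n \<ge> 0" shows "Tri (n + 1) = Tri n \<union> minkowski_sum (Lin n) (Tri 1)"
  unfolding mink_Lin_Tri[OF assms] by (auto simp: Tri_def)

lemma Tri_Int: assumes "n \<ge> 0" shows "Tri n \<inter> minkowski_sum (Lin n) (Tri 1) = Lin n"
  unfolding mink_Lin_Tri[OF assms] by (auto simp: Tri_def Lin_def)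

context mval begin

lemma additive_triangle0:
  fixes a b :: complex
  shows "additive (convex hull {0, a, b})"
proof -
  define f where "f = (\<lambda>p::real\<times>real. fst p *\<^sub>R a + snd p *\<^sub>R b)"
  have lin: "linear f" unfolding f_def
    by (intro linear_compose_add linear_scaleR_left linear_fst linear_snd
        linear_compose[of fst "\<lambda>t. t *\<^sub>R a", unfolded o_def]
        linear_compose[of snd "\<lambda>t. t *\<^sub>R b", unfolded o_def])
  have "additive (f ` ((\<lambda>n. Tri (real n)) 1))"
  proof (rule additive_param[OF lin, where L="\<lambda>n. Lin (real n)"])
    show "convex_body (Tri (real n))" for n by (simp add: convex_body_Tri)
    show "compact (Lin (real n))" for n by (simp add: Lin_segment)
    show "sc (real n) (Tri (real 1)) = Tri (real n)" for n using sc_Tri[of "real n"] by simp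
    show "Tri (real (Suc n)) = Tri (real n) \<union> minkowski_sum (Lin (real n)) (Tri (real 1))" for n
      using Tri_Suc[of "real n"] by (simp add: add.commute)
    show "Tri (real n) \<inter> minkowski_sum (Lin (real n)) (Tri (real 1)) = Lin (real n)" for n
      using Tri_Int[of "real n"] by simp
    show "additive (f ` Lin (real n))" for n
      using additive_segment[of "f (real n, 0)" "f (0, real n)"]
      by (simp add: Lin_segment closed_segment_linear_image[OF lin])
  qed
  moreover have "f ` Tri 1 = convex hull {0, a, b}"
  proof (rule set_eqI, rule iffI)
    fix x assume "x \<in> f ` Tri 1"
    then obtain p where p: "p \<in> Tri 1" "x = f p" by blast
    then show "x \<in> convex hull {0, a, b}" unfolding convex_hull_3 f_def Tri_def
      by (intro CollectI exI[of _ "1 - fst p - snd p"] exI[of _ "fst p"] exI[of _ "snd p"]) auto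
  next
    fix x assume "x \<in> convex hull {0, a, b}"
    then obtain u v w where "0 \<le> u" "0 \<le> v" "0 \<le> w" "u + v + w = 1" "x = u *\<^sub>R 0 + v *\<^sub>R a + w *\<^sub>R b"
      unfolding convex_hull_3 by blast
    then have "(v, w) \<in> Tri 1" "x = f (v, w)" unfolding Tri_def f_def by auto
    then show "x \<in> f ` Tri 1" by blast
  qed
  ultimately show ?thesis by simp
qed

lemma additive_triangle:
  fixes p a b :: complex
  shows "additive (convex hull {p, a, b})"
proof -
  have "convex hull {p, a, b} = (\<lambda>x. p + x) ` (convex hull {0, a - p, b - p})"
    by (simp add: convex_hull_translation[symmetric])
  also have "\<dots> = minkowski_sum {p} (convex hull {0, a - p, b - p})"
    by (simp add: minkowski_singleton_left)
  finally show ?thesis using additive_translate[OF additive_triangle0] by simp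
qed

end


definition orient :: "complex \<Rightarrow> complex \<Rightarrow> complex \<Rightarrow> real" where
  "orient p q x = (\<i> * (q - p)) \<bullet> (x - p)"

lemma orient_alt: "orient p q x = Re (q - p) * Im (x - p) - Im (q - p) * Re (x - p)"
  unfolding orient_def by (simp add: inner_complex_def algebra_simps)

lemma orient_swap: "orient p x q = - orient p q x"
  unfolding orient_alt by (simp add: algebra_simps)

lemma orient_halfspace_ge: "{x. orient p q x \<ge> 0} = {x. (\<i> * (q - p)) \<bullet> x \<ge> (\<i> * (q - p)) \<bullet> p}"
  unfolding orient_def by (auto simp: inner_diff_right)

lemma orient_halfspace_le: "{x. orient p q x \<le> 0} = {x. (\<i> * (q - p)) \<bullet> x \<le> (\<i> * (q - p)) \<bullet> p}"
  unfolding orient_def by (auto simp: inner_diff_right)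

lemma convex_orient_ge: "convex {x. orient p q x \<ge> 0}"
  unfolding orient_halfspace_ge by (rule convex_halfspace_ge)
lemma convex_orient_le: "convex {x. orient p q x \<le> 0}"
  unfolding orient_halfspace_le by (rule convex_halfspace_le)
lemma closed_orient_ge: "closed {x. orient p q x \<ge> 0}"
  unfolding orient_halfspace_ge by (rule closed_halfspace_ge)
lemma closed_orient_le: "closed {x. orient p q x \<le> 0}"
  unfolding orient_halfspace_le by (rule closed_halfspace_le)

lemma orient_collinear:
  assumes "x \<noteq> y" "orient x y z = 0"
  obtains t :: real where "z = x + t *\<^sub>R (y - x)"
proof -
  define w where "w = (z - x) / (y - x)"
  have yx: "y - x \<noteq> 0" using assms by simp
  have "Im w = 0"
    using assms(2) yx unfolding w_def orient_alt Im_divide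
    by (simp add: algebra_simps)
  then have "w = of_real (Re w)" by (simp add: complex_eq_iff)
  moreover have "z = x + w * (y - x)" unfolding w_def using yx by simp
  ultimately have "z = x + (Re w) *\<^sub>R (y - x)" by (metis scaleR_conv_of_real)
  then show ?thesis using that by blast
qed

lemma collinear_three:
  assumes "x \<noteq> y" "y \<noteq> z" "x \<noteq> z" "orient x y z = 0"
  shows "z \<in> closed_segment x y \<or> y \<in> closed_segment x z \<or> x \<in> closed_segment z y"
proof -
  obtain t where t: "z = x + t *\<^sub>R (y - x)" using orient_collinear[OF assms(1,4)] by blast
  consider "0 \<le> t \<and> t \<le> 1" | "t > 1" | "t < 0" by linarith
  then show ?thesis
  proof cases
    case 1
    then have "z = (1 - t) *\<^sub>R x + t *\<^sub>R y" using t by (simp add: algebra_simps)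
    then show ?thesis using 1 unfolding closed_segment_def by blast
  next
    case 2
    define u where "u = 1 / t"
    have "y = (1 - u) *\<^sub>R x + u *\<^sub>R z" "0 \<le> u" "u \<le> 1"
      using 2 unfolding u_def t by (auto simp: algebra_simps)
    then show ?thesis unfolding closed_segment_def by blast
  next
    case 3
    define u where "u = - t / (1 - t)"
    have a: "(1 - t) * (1 - u) = 1" and b: "(1 - t) * u = - t" using 3 by (simp_all add: u_def field_simps)
    have "(1 - t) *\<^sub>R ((1 - u) *\<^sub>R z + u *\<^sub>R y) = ((1 - t) * (1 - u)) *\<^sub>R z + ((1 - t) * u) *\<^sub>R y"
      by (simp add: scaleR_add_right)
    also have "\<dots> = z - t *\<^sub>R y" using a b by simp
    also have "\<dots> = (1 - t) *\<^sub>R x" unfolding t by (simp add: algebra_simps)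
    finally have "(1 - t) *\<^sub>R ((1 - u) *\<^sub>R z + u *\<^sub>R y) = (1 - t) *\<^sub>R x" .
    then have "x = (1 - u) *\<^sub>R z + u *\<^sub>R y" using 3 by simp
    moreover have "0 \<le> u" "u \<le> 1" using 3 by (simp_all add: u_def field_simps)
    ultimately have "x = (1 - u) *\<^sub>R z + u *\<^sub>R y" "0 \<le> u" "u \<le> 1" by auto
    then show ?thesis unfolding closed_segment_def by blast
  qed
qed

lemma four_point:
  assumes "orient a b c \<noteq> 0" "orient a b d \<noteq> 0" "orient a c d \<noteq> 0"
  shows "orient a b c * orient a b d < 0 \<or> orient a c b * orient a c d < 0 \<or>
         orient a d b * orient a d c < 0"
proof (rule ccontr)
  assume "\<not> ?thesis"
  then have h: "orient a b c * orient a b d \<ge> 0" "- orient a b c * orient a c d \<ge> 0"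
      "orient a b d * orient a c d \<ge> 0"
    using orient_swap[of a b c] orient_swap[of a b d] orient_swap[of a c d] by auto
  define X Y Z where "X = orient a b c" "Y = orient a b d" "Z = orient a c d"
  have "X * Y > 0" "X * Z < 0" "Y * Z > 0"
    using h assms unfolding X_Y_Z_def
    by (auto simp: less_le zero_less_mult_iff mult_less_0_iff)
  then have "(X * Y) * (Y * Z) > 0" by simp
  moreover have "(X * Y) * (Y * Z) = (X * Z) * (Y * Y)" by (simp add: algebra_simps)
  moreover have "Y * Y \<ge> 0" by simp
  ultimately show False using \<open>X * Z < 0\<close>
    by (metis mult_nonpos_nonneg not_le less_imp_le)
qed


context mval begin

lemma additive_union:
  assumes X: "additive X" and Y: "additive Y" and XY: "additive (X \<inter> Y)" and U: "convex (X \<union> Y)"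
  shows "additive (X \<union> Y)"
proof -
  have Xb: "convex_body X" and Yb: "convex_body Y" using X Y by (auto simp: additive_def)
  have Ub: "convex_body (X \<union> Y)" using Xb Yb U by (auto simp: convex_body_def)
  have vXY: "\<mu> (X \<union> Y) + \<mu> (X \<inter> Y) = \<mu> X + \<mu> Y" by (rule mu_val[OF Xb Yb Ub])
  have "\<mu> (minkowski_sum K (X \<union> Y)) = \<mu> K + \<mu> (X \<union> Y)" if K: "convex_body K" for K
  proof -
    have b1: "convex_body (minkowski_sum K X)" "convex_body (minkowski_sum K Y)"
      "convex_body (minkowski_sum K (X \<union> Y))"
      using K Xb Yb Ub by (auto intro: convex_body_minkowski_sum)
    have un: "minkowski_sum K (X \<union> Y) = minkowski_sum K X \<union> minkowski_sum K Y" by (rule minkowski_sum_Un)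
    have int: "minkowski_sum K X \<inter> minkowski_sum K Y = minkowski_sum K (X \<inter> Y)"
      using K Xb Yb U by (intro minkowski_sum_Int) (auto simp: convex_body_def)
    have "\<mu> (minkowski_sum K (X \<union> Y)) + \<mu> (minkowski_sum K (X \<inter> Y))
        = \<mu> (minkowski_sum K X) + \<mu> (minkowski_sum K Y)"
      using mu_val[OF b1(1,2)] b1(3) unfolding un int by simp
    moreover have "\<mu> (minkowski_sum K X) = \<mu> K + \<mu> X" "\<mu> (minkowski_sum K Y) = \<mu> K + \<mu> Y"
      "\<mu> (minkowski_sum K (X \<inter> Y)) = \<mu> K + \<mu> (X \<inter> Y)"
      using X Y XY K unfolding additive_def by blast+
    ultimately show ?thesis using vXY by simp
  qed
  then show ?thesis using Ub by (simp add: additive_def)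
qed

lemma split_hull:
  assumes fin: "finite S" and pS: "p \<in> S" and qS: "q \<in> S" and pq: "p \<noteq> q"
    and rS: "r \<in> S" and sS: "s \<in> S" and r: "orient p q r > 0" and s: "orient p q s < 0"
    and ep: "p extreme_point_of (convex hull S)" and eq: "q extreme_point_of (convex hull S)"
    and IH: "\<And>T. T \<subseteq> S \<Longrightarrow> card T < card S \<Longrightarrow> T \<noteq> {} \<Longrightarrow> additive (convex hull T)"
  shows "additive (convex hull S)"
proof -
  define f where "f = orient p q"
  define Sp where "Sp = {x\<in>S. f x \<ge> 0}"
  define Sm where "Sm = {x\<in>S. f x \<le> 0}"
  have fp: "f p = 0" "f q = 0" unfolding f_def orient_def by (simp_all add: inner_complex_def algebra_simps)
  have Sp: "Sp \<subseteq> S" "card Sp < card S" "Sp \<noteq> {}" "p \<in> Sp" "q \<in> Sp"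
  proof -
    show "Sp \<subseteq> S" unfolding Sp_def by auto
    moreover have "s \<notin> Sp" using s unfolding Sp_def f_def by auto
    ultimately show "card Sp < card S" using sS fin by (intro psubset_card_mono) auto
    show "p \<in> Sp" "q \<in> Sp" using pS qS fp unfolding Sp_def by auto
    then show "Sp \<noteq> {}" by auto
  qed
  have Sm: "Sm \<subseteq> S" "card Sm < card S" "Sm \<noteq> {}" "p \<in> Sm" "q \<in> Sm"
  proof -
    show "Sm \<subseteq> S" unfolding Sm_def by auto
    moreover have "r \<notin> Sm" using r unfolding Sm_def f_def by auto
    ultimately show "card Sm < card S" using rS fin by (intro psubset_card_mono) auto
    show "p \<in> Sm" "q \<in> Sm" using pS qS fp unfolding Sm_def by auto
    then show "Sm \<noteq> {}" by auto
  qed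
  have hp: "convex hull Sp \<subseteq> {x. f x \<ge> 0}"
    unfolding f_def by (rule hull_minimal) (auto simp: Sp_def f_def convex_orient_ge)
  have hm: "convex hull Sm \<subseteq> {x. f x \<le> 0}"
    unfolding f_def by (rule hull_minimal) (auto simp: Sm_def f_def convex_orient_le)
  have pC: "p \<in> convex hull S" "q \<in> convex hull S" using pS qS by (auto intro: hull_inc)
  have A: "z \<in> closed_segment p q" if z: "z \<in> convex hull S" "f z = 0" for z
  proof -
    obtain t where t: "z = p + t *\<^sub>R (q - p)" using orient_collinear[OF pq, of z] z unfolding f_def by blast
    consider "0 \<le> t \<and> t \<le> 1" | "t > 1" | "t < 0" by linarith
    then show ?thesis
    proof cases
      case 1
      then have "z = (1 - t) *\<^sub>R p + t *\<^sub>R q" using t by (simp add: algebra_simps)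
      then show ?thesis using 1 unfolding closed_segment_def by blast
    next
      case 2
      define u where "u = 1 / t"
      have "q = (1 - u) *\<^sub>R p + u *\<^sub>R z" "0 < u" "u < 1"
        using 2 unfolding u_def t by (auto simp: algebra_simps)
      moreover have "p \<noteq> z" using 2 pq unfolding t by auto
      ultimately have "q \<in> open_segment p z" unfolding in_segment by blast
      then show ?thesis using eq pC z unfolding extreme_point_of_def by blast
    next
      case 3
      define u where "u = - t / (1 - t)"
      have a: "(1 - t) * (1 - u) = 1" and b: "(1 - t) * u = - t" using 3 by (simp_all add: u_def field_simps)
      have "(1 - t) *\<^sub>R ((1 - u) *\<^sub>R z + u *\<^sub>R q) = ((1 - t) * (1 - u)) *\<^sub>R z + ((1 - t) * u) *\<^sub>R q"
        by (simp add: scaleR_add_right)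
      also have "\<dots> = z - t *\<^sub>R q" using a b by simp
      also have "\<dots> = (1 - t) *\<^sub>R p" unfolding t by (simp add: algebra_simps)
      finally have "(1 - t) *\<^sub>R ((1 - u) *\<^sub>R z + u *\<^sub>R q) = (1 - t) *\<^sub>R p" .
      then have "p = (1 - u) *\<^sub>R z + u *\<^sub>R q" using 3 by simp
      moreover have "0 < u" "u < 1" using 3 by (simp_all add: u_def field_simps)
      moreover have "z \<noteq> q"
      proof
        assume "z = q"
        then have "(1 - t) *\<^sub>R (q - p) = 0" unfolding t by (auto simp: algebra_simps)
        then show False using 3 pq by simp
      qed
      ultimately have "p \<in> open_segment z q" unfolding in_segment by blast
      then show ?thesis using ep pC z unfolding extreme_point_of_def by blast
    qed
  qed
  have segp: "closed_segment p q \<subseteq> convex hull Sp" using Sp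
    by (intro closed_segment_subset) (auto intro: hull_inc)
  have segm: "closed_segment p q \<subseteq> convex hull Sm" using Sm
    by (intro closed_segment_subset) (auto intro: hull_inc)
  have subS: "convex hull Sp \<subseteq> convex hull S" "convex hull Sm \<subseteq> convex hull S"
    using hull_mono[OF Sp(1)] hull_mono[OF Sm(1)] by auto
  have C: "convex hull Sp \<inter> convex hull Sm = closed_segment p q"
  proof
    show "convex hull Sp \<inter> convex hull Sm \<subseteq> closed_segment p q"
    proof
      fix z assume "z \<in> convex hull Sp \<inter> convex hull Sm"
      then have "z \<in> convex hull S" "f z = 0" using hp hm subS by fastforce+
      then show "z \<in> closed_segment p q" by (rule A)
    qed
    show "closed_segment p q \<subseteq> convex hull Sp \<inter> convex hull Sm" using segp segm by auto
  qed
  have mixed: "closed_segment x y \<subseteq> convex hull Sp \<union> convex hull Sm"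
    if x: "x \<in> convex hull Sp" and y: "y \<in> convex hull Sm" for x y
  proof -
    have cl: "closed {x. f x \<ge> 0}" "closed {x. f x \<le> 0}" unfolding f_def
      by (rule closed_orient_ge, rule closed_orient_le)
    have cv: "convex ({x. f x \<ge> 0} \<union> {x. f x \<le> 0})"
    proof -
      have "{x. f x \<ge> 0} \<union> {x. f x \<le> 0} = UNIV" by auto
      then show ?thesis by simp
    qed
    obtain z where z: "z \<in> closed_segment x y" "f z \<ge> 0" "f z \<le> 0"
    proof -
      have "0 \<le> f x" "f y \<le> 0" using x y hp hm by blast+
      then show ?thesis using cut_point[OF cl cv, of x y] that by auto
    qed
    have "z \<in> convex hull S"
      using z(1) x y subS closed_segment_subset[OF _ _ convex_convex_hull, of x S y] by auto
    then have zpq: "z \<in> closed_segment p q" using A z by simp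
    have "closed_segment x y = closed_segment x z \<union> closed_segment z y"
      using Un_closed_segment[OF z(1)] by simp
    moreover have "closed_segment x z \<subseteq> convex hull Sp"
      using x zpq segp by (intro closed_segment_subset) auto
    moreover have "closed_segment z y \<subseteq> convex hull Sm"
      using y zpq segm by (intro closed_segment_subset) auto
    ultimately show ?thesis by auto
  qed
  have segU: "closed_segment x y \<subseteq> convex hull Sp \<union> convex hull Sm"
    if "x \<in> convex hull Sp \<union> convex hull Sm" "y \<in> convex hull Sp \<union> convex hull Sm" for x y
  proof -
    from that consider "x \<in> convex hull Sp" "y \<in> convex hull Sp" | "x \<in> convex hull Sm" "y \<in> convex hull Sm"
      | "x \<in> convex hull Sp" "y \<in> convex hull Sm" | "x \<in> convex hull Sm" "y \<in> convex hull Sp" by blast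
    then show "closed_segment x y \<subseteq> convex hull Sp \<union> convex hull Sm"
    proof cases
      case 1 then show ?thesis using closed_segment_subset[OF _ _ convex_convex_hull] by blast
    next
      case 2 then show ?thesis using closed_segment_subset[OF _ _ convex_convex_hull] by blast
    next
      case 3 then show ?thesis by (rule mixed)
    next
      case 4 then show ?thesis using mixed[of y x] by (simp add: closed_segment_commute)
    qed
  qed
  have cU: "convex (convex hull Sp \<union> convex hull Sm)"
    by (rule iffD2[OF convex_contains_segment]) (use segU in blast)
  have B: "convex hull Sp \<union> convex hull Sm = convex hull S"
  proof
    show "convex hull Sp \<union> convex hull Sm \<subseteq> convex hull S" using subS by auto
    have "S \<subseteq> convex hull Sp \<union> convex hull Sm"
    proof
      fix x assume "x \<in> S"
      then have "x \<in> Sp \<or> x \<in> Sm" unfolding Sp_def Sm_def by auto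
      then show "x \<in> convex hull Sp \<union> convex hull Sm" by (auto intro: hull_inc)
    qed
    then show "convex hull S \<subseteq> convex hull Sp \<union> convex hull Sm"
      using cU by (rule hull_minimal)
  qed
  have "additive (convex hull Sp \<union> convex hull Sm)"
    using IH[OF Sp(1,2,3)] IH[OF Sm(1,2,3)] additive_segment[of p q, folded C] cU
    by (rule additive_union)
  then show ?thesis unfolding B .
qed

end

context mval begin

lemma additive_hull: "finite S \<Longrightarrow> S \<noteq> {} \<Longrightarrow> additive (convex hull S)"
proof (induction "card S" arbitrary: S rule: less_induct)
  case (less S)
  have fin: "finite S" and ne: "S \<noteq> {}" by fact+
  have IH: "additive (convex hull T)" if "T \<subseteq> S" "card T < card S" "T \<noteq> {}" for T
    using less.hyps[OF that(2)] that finite_subset[OF that(1) fin] by blast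
  have cpos: "card S > 0" using fin ne by (simp add: card_gt_0_iff)
  show ?case
  proof (cases "card S \<le> 3")
    case True
    then consider "card S = 1" | "card S = 2" | "card S = 3" using cpos by linarith
    then show ?thesis
    proof cases
      case 1
      then obtain a where "S = {a}" by (rule card_1_singletonE)
      then show ?thesis using additive_triangle[of a a a] by simp
    next
      case 2
      then obtain a b where "S = {a, b}" unfolding card_2_iff by blast
      then show ?thesis using additive_triangle[of a b b] by simp
    next
      case 3
      then obtain a b c where "S = {a, b, c}" unfolding card_3_iff by blast
      then show ?thesis using additive_triangle[of a b c] by simp
    qed
  next
    case False
    then have c4: "card S \<ge> 4" by simp
    show ?thesis
    proof (cases "\<exists>p\<in>S. p \<in> convex hull (S - {p})")
      case True
      then obtain p where p: "p \<in> S" "p \<in> convex hull (S - {p})" by blast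
      have "convex hull S = convex hull (S - {p})"
        using hull_redundant[OF p(2)] insert_Diff[OF p(1)] by simp
      moreover have "card (S - {p}) < card S" using p(1) fin cpos by (simp add: card_Diff_singleton)
      moreover have "S - {p} \<noteq> {}" using c4 p(1) fin
        by (metis card_Diff_singleton card_eq_0_iff diff_is_0_eq finite_Diff le_trans numeral_le_one_iff semiring_norm(69) one_le_numeral)
      ultimately show ?thesis using IH[of "S - {p}"] by auto
    next
      case False
      then have np: "p \<notin> convex hull (S - {p})" if "p \<in> S" for p using that by blast
      have ext: "p extreme_point_of (convex hull S)" if "p \<in> S" for p
        using extreme_point_of_convex_hull_insert[of "S - {p}" p] fin np[OF that] insert_Diff[OF that]
        by simp
      have nc: "orient x y z \<noteq> 0" if "x \<in> S" "y \<in> S" "z \<in> S" "x \<noteq> y" "y \<noteq> z" "x \<noteq> z" for x y z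
      proof
        assume o: "orient x y z = 0"
        have sub: "closed_segment u v \<subseteq> convex hull (S - {w})" if "u \<in> S" "v \<in> S" "u \<noteq> w" "v \<noteq> w" for u v w
          unfolding segment_convex_hull using that by (intro hull_mono) auto
        from collinear_three[OF that(4,5,6) o] show False
          using sub[of x y z] sub[of x z y] sub[of z y x] np that by blast
      qed
      obtain a where a: "a \<in> S" using ne by blast
      have "card (S - {a}) \<ge> 3" using c4 a fin by (simp add: card_Diff_singleton)
      then obtain b where b: "b \<in> S - {a}" by (metis all_not_in_conv card.empty not_numeral_le_zero)
      have "card (S - {a} - {b}) \<ge> 2" using \<open>card (S - {a}) \<ge> 3\<close> b fin by (simp add: card_Diff_singleton)
      then obtain c where c: "c \<in> S - {a} - {b}" by (metis all_not_in_conv card.empty not_numeral_le_zero)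
      have "card (S - {a} - {b} - {c}) \<ge> 1" using \<open>card (S - {a} - {b}) \<ge> 2\<close> c fin by (simp add: card_Diff_singleton)
      then obtain d where d: "d \<in> S - {a} - {b} - {c}" by (metis all_not_in_conv card.empty not_one_le_zero)
      have go: "additive (convex hull S)"
        if "p \<in> S" "q \<in> S" "p \<noteq> q" "r \<in> S" "s \<in> S" "orient p q r * orient p q s < 0" for p q r s
      proof -
        have IH': "\<And>T. T \<subseteq> S \<Longrightarrow> card T < card S \<Longrightarrow> T \<noteq> {} \<Longrightarrow> additive (convex hull T)"
          using IH by blast
        from that(6) consider "orient p q r > 0" "orient p q s < 0" | "orient p q r < 0" "orient p q s > 0"
          by (auto simp: mult_less_0_iff)
        then show ?thesis
        proof cases
          case 1 then show ?thesis
            using split_hull[OF fin that(1,2,3,4,5) _ _ ext[OF that(1)] ext[OF that(2)] IH'] by blast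
        next
          case 2 then show ?thesis
            using split_hull[OF fin that(1,2,3,5,4) _ _ ext[OF that(1)] ext[OF that(2)] IH'] by blast
        qed
      qed
      have "orient a b c \<noteq> 0" "orient a b d \<noteq> 0" "orient a c d \<noteq> 0"
        using nc a b c d by auto
      from four_point[OF this] show ?thesis
        using go[of a b c d] go[of a c b d] go[of a d b c] a b c d by auto
    qed
  qed
qed

end

lemma polytope_approx:
  fixes B :: "'a::euclidean_space set"
  assumes B: "convex_body B" and e: "e > 0"
  obtains S where "finite S" "S \<noteq> {}" "convex hull S \<subseteq> B" "convex_body (convex hull S)"
    "hausdorff_dist (convex hull S) B \<le> e"
proof -
  have cB: "compact B" "convex B" "B \<noteq> {}" using B by (auto simp: convex_body_def)
  have "B \<subseteq> (\<Union>x\<in>B. ball x e)" using e by auto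
  then obtain S where S: "S \<subseteq> B" "finite S" "B \<subseteq> (\<Union>x\<in>S. ball x e)"
    using compactE_image[OF cB(1), of B "\<lambda>x. ball x e"] by blast
  have Sne: "S \<noteq> {}" using S(3) cB(3) by auto
  have sub: "convex hull S \<subseteq> B" using S(1) cB(2) by (rule hull_minimal)
  have body: "convex_body (convex hull S)"
    using S(2) Sne by (auto simp: convex_body_def compact_convex_hull finite_imp_compact)
  have "hausdorff_dist (convex hull S) B \<le> e"
  proof (rule hd_least)
    show "convex hull S \<noteq> {}" "B \<noteq> {}" using Sne cB by auto
    fix x assume "x \<in> convex hull S"
    then have "infdist x B = 0" using sub by (auto intro: infdist_zero)
    then show "infdist x B \<le> e" using e by simp
  next
    fix y assume "y \<in> B"
    then obtain x where "x \<in> S" "dist x y < e" using S(3) by auto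
    moreover have "x \<in> convex hull S" using \<open>x \<in> S\<close> by (rule hull_inc)
    ultimately have "infdist y (convex hull S) \<le> dist y x" by (intro infdist_le)
    then show "infdist y (convex hull S) \<le> e" using \<open>dist x y < e\<close> by (simp add: dist_commute)
  qed
  then show ?thesis using that S(2) Sne sub body by blast
qed

context mval begin

lemma additive_all:
  assumes B: "convex_body B"
  shows "additive B"
proof -
  have "\<forall>n. \<exists>S. finite S \<and> S \<noteq> {} \<and> convex_body (convex hull S) \<and>
      hausdorff_dist (convex hull S) B \<le> 1 / real (Suc n)"
  proof
    fix n
    show "\<exists>S. finite S \<and> S \<noteq> {} \<and> convex_body (convex hull S) \<and>
      hausdorff_dist (convex hull S) B \<le> 1 / real (Suc n)"
      using polytope_approx[OF B, of "1 / real (Suc n)"] by auto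
  qed
  then obtain Sf where Sf: "\<And>n. finite (Sf n)" "\<And>n. Sf n \<noteq> {}" "\<And>n. convex_body (convex hull (Sf n))"
    "\<And>n. hausdorff_dist (convex hull (Sf n)) B \<le> 1 / real (Suc n)"
    by metis
  define P where "P n = convex hull (Sf n)" for n
  have PB: "convex_body (P n)" for n using Sf(3) unfolding P_def .
  have PA: "additive (P n)" for n unfolding P_def using additive_hull[OF Sf(1) Sf(2)] .
  have cB: "compact B" "B \<noteq> {}" using B by (auto simp: convex_body_def)
  have hd0: "(\<lambda>n. hausdorff_dist (P n) B) \<longlonglongrightarrow> 0"
  proof (rule tendsto_sandwich[where f="\<lambda>_. 0" and h="\<lambda>n. 1 / real (Suc n)"])
    show "\<forall>\<^sub>F n in sequentially. 0 \<le> hausdorff_dist (P n) B"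
      using PB cB by (auto intro!: always_eventually hd_nonneg simp: convex_body_def)
    show "\<forall>\<^sub>F n in sequentially. hausdorff_dist (P n) B \<le> 1 / real (Suc n)"
      using Sf(4) unfolding P_def by (auto intro!: always_eventually)
    show "(\<lambda>n. 1 / real (Suc n)) \<longlonglongrightarrow> 0"
      using LIMSEQ_inverse_real_of_nat by (simp add: inverse_eq_divide)
  qed auto
  have "\<mu> (minkowski_sum K B) = \<mu> K + \<mu> B" if K: "convex_body K" for K
  proof -
    have cK: "compact K" "K \<noteq> {}" using K by (auto simp: convex_body_def)
    have KP: "convex_body (minkowski_sum K (P n))" for n using K PB by (rule convex_body_minkowski_sum)
    have KB: "convex_body (minkowski_sum K B)" using K B by (rule convex_body_minkowski_sum)
    have "(\<lambda>n. hausdorff_dist (minkowski_sum K (P n)) (minkowski_sum K B)) \<longlonglongrightarrow> 0"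
    proof (rule tendsto_sandwich[where f="\<lambda>_. 0" and h="\<lambda>n. hausdorff_dist (P n) B"])
      show "\<forall>\<^sub>F n in sequentially. 0 \<le> hausdorff_dist (minkowski_sum K (P n)) (minkowski_sum K B)"
        using KP KB by (auto intro!: always_eventually hd_nonneg simp: convex_body_def)
      have "hausdorff_dist (minkowski_sum K (P n)) (minkowski_sum K B) \<le> hausdorff_dist K K + hausdorff_dist (P n) B" for n
        using cK cB PB[of n] by (intro hd_minkowski_sum_le) (auto simp: convex_body_def)
      then show "\<forall>\<^sub>F n in sequentially. hausdorff_dist (minkowski_sum K (P n)) (minkowski_sum K B) \<le> hausdorff_dist (P n) B"
        using hd_self[OF cK] by (auto intro!: always_eventually)
    qed (use hd0 in auto)
    then have l1: "(\<lambda>n. \<mu> (minkowski_sum K (P n))) \<longlonglongrightarrow> \<mu> (minkowski_sum K B)"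
      by (rule mu_cont[OF KP KB])
    have l2: "(\<lambda>n. \<mu> (P n)) \<longlonglongrightarrow> \<mu> B" by (rule mu_cont[OF PB B hd0])
    have eq: "\<mu> (minkowski_sum K (P n)) = \<mu> K + \<mu> (P n)" for n using PA[of n] K by (simp add: additive_def)
    have "(\<lambda>n. \<mu> (minkowski_sum K (P n))) \<longlonglongrightarrow> \<mu> K + \<mu> B"
      unfolding eq by (intro tendsto_intros l2)
    then show ?thesis using LIMSEQ_unique[OF l1] by simp
  qed
  then show ?thesis using B by (simp add: additive_def)
qed

lemma mu_minkowski: "convex_body K \<Longrightarrow> convex_body L \<Longrightarrow> \<mu> (minkowski_sum K L) = \<mu> K + \<mu> L"
  using additive_all[of L] by (simp add: additive_def)

end

lemma hd_sym: "hausdorff_dist A B = hausdorff_dist B A"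
  unfolding hausdorff_dist_def by (simp add: max.commute)

lemma hd_support:
  fixes Q1 Q2 :: "'a::euclidean_space set"
  assumes Q1: "convex_body Q1" and Q2: "convex_body Q2" and e: "e \<ge> 0"
    and sup: "\<And>w. \<bar>support_fun Q1 w - support_fun Q2 w\<bar> \<le> e * norm w"
  shows "hausdorff_dist Q1 Q2 \<le> e"
proof -
  have one: "infdist x B \<le> e" if A: "convex_body A" and B: "convex_body B" and x: "x \<in> A"
    and s: "\<And>w. support_fun A w - support_fun B w \<le> e * norm w" for A B x
  proof -
    have cB: "compact B" "convex B" "B \<noteq> {}" "closed B" using B by (auto simp: convex_body_def compact_imp_closed)
    obtain y where y: "y \<in> B" "infdist x B = dist x y" using infdist_attains_inf[OF cB(4,3)] by blast
    have near: "\<forall>z\<in>B. dist x y \<le> dist x z" using y by (metis infdist_le)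
    define w where "w = x - y"
    have "z \<bullet> w \<le> y \<bullet> w" if "z \<in> B" for z
      using any_closest_point_dot[OF cB(2,4) y(1) that near] unfolding w_def
      by (simp add: inner_diff_right inner_commute)
    then have "support_fun B w \<le> y \<bullet> w" using cB(3) by (intro support_fun_least) auto
    moreover have "x \<bullet> w \<le> support_fun A w" using A x by (intro support_fun_upper) (auto simp: convex_body_def)
    ultimately have "x \<bullet> w - y \<bullet> w \<le> e * norm w" using s[of w] by linarith
    moreover have "x \<bullet> w - y \<bullet> w = norm w * norm w"
      unfolding w_def by (simp add: inner_diff_left flip: power2_eq_square dot_square_norm)
    ultimately have "norm w * norm w \<le> e * norm w" by simp
    then have "norm w \<le> e" using e by (cases "norm w = 0") (auto simp: mult_le_cancel_right)
    then show ?thesis using y(2) unfolding w_def dist_norm by simp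
  qed
  show ?thesis
  proof (rule hd_least)
    show "Q1 \<noteq> {}" "Q2 \<noteq> {}" using Q1 Q2 by (auto simp: convex_body_def)
    show "infdist x Q2 \<le> e" if "x \<in> Q1" for x
      using one[OF Q1 Q2 that] sup by (metis abs_le_D1)
    show "infdist y Q1 \<le> e" if "y \<in> Q2" for y
      using one[OF Q2 Q1 that] sup by (metis abs_le_D2 minus_diff_eq)
  qed
qed

section \<open>The determinant\<close>

lemma det2_add_left: "det2 (a + b) w = det2 a w + det2 b w"
  unfolding det2_def by (simp add: algebra_simps)
lemma det2_diff_left: "det2 (a - b) w = det2 a w - det2 b w"
  unfolding det2_def by (simp add: algebra_simps)
lemma det2_scale_left: "det2 (c *\<^sub>R a) w = c *\<^sub>R det2 a w"
  unfolding det2_def vector_scaleR_component by (simp add: scaleR_conv_of_real algebra_simps)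
lemma det2_add_right: "det2 k (a + b) = det2 k a + det2 k b"
  unfolding det2_def by (simp add: algebra_simps)
lemma det2_scale_right: "det2 k (c *\<^sub>R a) = c *\<^sub>R det2 k a"
  unfolding det2_def vector_scaleR_component by (simp add: scaleR_conv_of_real algebra_simps)

lemma linear_det2: "linear (\<lambda>k. det2 k w)"
  by (rule linearI) (simp_all add: det2_add_left det2_scale_left)

lemma norm_det2: "norm (det2 v w) \<le> 2 * norm v * norm w"
proof -
  have "norm (det2 v w) \<le> norm (v $ 1) * norm (w $ 2) + norm (v $ 2) * norm (w $ 1)"
    unfolding det2_def by (metis norm_mult norm_triangle_ineq4)
  also have "\<dots> \<le> norm v * norm w + norm v * norm w"
    by (intro add_mono mult_mono Finite_Cartesian_Product.norm_nth_le) auto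
  finally show ?thesis by simp
qed

lemma det_set_body: "convex_body K \<Longrightarrow> convex_body (det_set K w)"
  unfolding det_set_def by (rule convex_body_linear_image[OF _ linear_det2])

lemma det_set_scale: "det_set K (c *\<^sub>R w) = sc c (det_set K w)"
  unfolding det_set_def sc_def image_image by (simp add: det2_scale_right)

lemma det_set_add: "det_set K (a + b) \<subseteq> minkowski_sum (det_set K a) (det_set K b)"
proof
  fix z assume "z \<in> det_set K (a + b)"
  then obtain k where k: "k \<in> K" "z = det2 k (a + b)" unfolding det_set_def by blast
  then have "z = det2 k a + det2 k b" "det2 k a \<in> det_set K a" "det2 k b \<in> det_set K b"
    unfolding det_set_def by (auto simp: det2_add_right)
  then show "z \<in> minkowski_sum (det_set K a) (det_set K b)" unfolding mem_minkowski by blast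
qed

lemma det_set_translate: "det_set ((\<lambda>k. k + x) ` K) w = (\<lambda>z. z + det2 x w) ` det_set K w"
  unfolding det_set_def image_image by (simp add: det2_add_left)

lemma det_set_Un: "det_set (K \<union> L) w = det_set K w \<union> det_set L w"
  unfolding det_set_def by (rule image_Un)

lemma det_set_Int:
  assumes "convex_body K" "convex_body L" "convex (K \<union> L)"
  shows "det_set (K \<inter> L) w = det_set K w \<inter> det_set L w"
  unfolding det_set_def using assms
  by (intro linear_image_Int linear_det2) (auto simp: convex_body_def compact_imp_closed)

lemma det_set_close:
  assumes K: "convex_body K" and L: "convex_body L"
  shows "det_set K w \<subseteq> minkowski_sum (det_set L w) (cball 0 (2 * hausdorff_dist K L * norm w))"
proof
  fix z assume "z \<in> det_set K w"
  then obtain k where k: "k \<in> K" "z = det2 k w" unfolding det_set_def by blast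
  obtain l where l: "l \<in> L" "dist k l \<le> hausdorff_dist K L"
    using hd_near[OF _ _ _ k(1), of L] K L by (auto simp: convex_body_def)
  have "z = det2 l w + det2 (k - l) w" unfolding k det2_diff_left by simp
  moreover have "norm (det2 (k - l) w) \<le> 2 * hausdorff_dist K L * norm w"
  proof -
    have "norm (det2 (k - l) w) \<le> 2 * norm (k - l) * norm w" by (rule norm_det2)
    also have "\<dots> \<le> 2 * hausdorff_dist K L * norm w"
      using l(2) by (intro mult_right_mono) (auto simp: dist_norm)
    finally show ?thesis .
  qed
  moreover have "det2 l w \<in> det_set L w" using l(1) unfolding det_set_def by blast
  moreover have "det2 (k - l) w \<in> cball 0 (2 * hausdorff_dist K L * norm w)"
    using calculation(2) by (simp add: dist_norm)
  ultimately show "z \<in> minkowski_sum (det_set L w) (cball 0 (2 * hausdorff_dist K L * norm w))"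
    unfolding mem_minkowski by blast
qed

lemma cball_sc: "r \<ge> 0 \<Longrightarrow> cball (0::'a::real_normed_vector) r = sc r (cball 0 1)"
proof (cases "r = 0")
  case True
  have "(0::'a) \<in> cball 0 1" by simp
  then have "(\<lambda>k. 0 *\<^sub>R k) ` cball (0::'a) 1 = {0}" by (auto simp: image_constant_conv)
  then show ?thesis unfolding sc_def using True by simp
next
  case False
  assume "r \<ge> 0"
  then have "(\<lambda>x. r *\<^sub>R x) ` cball 0 1 = cball (0::'a) r" using cball_scale[of r 0 1] False by simp
  then show ?thesis unfolding sc_def by (rule sym)
qed


definition adjm :: "complex^2^2 \<Rightarrow> complex^2^2" where
  "adjm g = (\<chi> i j. if i = 1 then (if j = 1 then g$2$2 else - g$1$2) else (if j = 1 then - g$2$1 else g$1$1))"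

lemma two_ne: "(1::2) \<noteq> 2" by simp

lemma adjm_comp[simp]: "adjm g $ 1 $ 1 = g$2$2" "adjm g $ 1 $ 2 = - g$1$2"
  "adjm g $ 2 $ 1 = - g$2$1" "adjm g $ 2 $ 2 = g$1$1"
  unfolding adjm_def by simp_all

lemma mv_comp: "((A::'a::semiring_1^2^'n) *v x) $ i = A$i$1 * x$1 + A$i$2 * x$2"
  by (simp add: matrix_vector_mult_def sum_2)

lemma det2_matrix: "det2 (g *v k) w = det2 k (adjm g *v w)"
  unfolding det2_def mv_comp by (simp add: algebra_simps)

lemma linear_mv: "linear (\<lambda>x::complex^2. (g::complex^2^2) *v x)"
proof (rule linearI)
  show "g *v (x + y) = g *v x + g *v y" for x y by (simp add: matrix_vector_right_distrib)
  show "g *v (c *\<^sub>R x) = c *\<^sub>R (g *v x)" for c x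
    unfolding vec_eq_iff mv_comp vector_scaleR_component by (simp add: scaleR_conv_of_real algebra_simps)
qed

lemma adjm_left:
  assumes "det g = 1" shows "adjm g *v (g *v x) = x"
proof -
  have d: "g$1$1 * g$2$2 - g$1$2 * g$2$1 = 1" using assms by (simp add: det_2)
  have c1: "(adjm g *v (g *v x)) $ 1 = (g$1$1 * g$2$2 - g$1$2 * g$2$1) * x$1"
    unfolding mv_comp by (simp add: algebra_simps)
  have c2: "(adjm g *v (g *v x)) $ 2 = (g$1$1 * g$2$2 - g$1$2 * g$2$1) * x$2"
    unfolding mv_comp by (simp add: algebra_simps)
  show ?thesis using c1 c2 d by (simp add: vec_eq_iff forall_2)
qed

lemma adjm_right:
  assumes "det g = 1" shows "g *v (adjm g *v x) = x"
proof -
  have d: "g$1$1 * g$2$2 - g$1$2 * g$2$1 = 1" using assms by (simp add: det_2)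
  have c1: "(g *v (adjm g *v x)) $ 1 = (g$1$1 * g$2$2 - g$1$2 * g$2$1) * x$1"
    unfolding mv_comp by (simp add: algebra_simps)
  have c2: "(g *v (adjm g *v x)) $ 2 = (g$1$1 * g$2$2 - g$1$2 * g$2$1) * x$2"
    unfolding mv_comp by (simp add: algebra_simps)
  show ?thesis using c1 c2 d by (simp add: vec_eq_iff forall_2)
qed

lemma support_fun_linear_image:
  fixes f :: "'a::euclidean_space \<Rightarrow> 'b::euclidean_space"
  assumes "linear f"
  shows "support_fun (f ` Q) w = support_fun Q (adjoint f w)"
  unfolding support_fun_def image_image using adjoint_works[OF assms] by simp

lemma adjoint_inverse:
  fixes G H :: "'a::euclidean_space \<Rightarrow> 'a"
  assumes G: "linear G" and H: "linear H" and HG: "\<And>x. H (G x) = x"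
  shows "adjoint G (adjoint H y) = y"
proof -
  have "x \<bullet> adjoint G (adjoint H y) = x \<bullet> y" for x
  proof -
    have "x \<bullet> adjoint G (adjoint H y) = G x \<bullet> adjoint H y" by (rule adjoint_works[OF G])
    also have "\<dots> = adjoint H y \<bullet> G x" by (rule inner_commute)
    also have "\<dots> = y \<bullet> H (G x)" by (rule adjoint_clauses(2)[OF H])
    finally show ?thesis by (simp add: HG inner_commute)
  qed
  then show ?thesis using vector_eq_ldot by blast
qed

lemma dual_inv_eq:
  assumes "det g = 1"
  shows "dual_inv g = adjoint (\<lambda>x. adjm g *v x)"
proof -
  have a: "adjoint (\<lambda>x. g *v x) (adjoint (\<lambda>x. adjm g *v x) y) = y" for y
    by (rule adjoint_inverse[OF linear_mv linear_mv adjm_left[OF assms]])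
  have b: "adjoint (\<lambda>x. adjm g *v x) (adjoint (\<lambda>x. g *v x) y) = y" for y
    by (rule adjoint_inverse[OF linear_mv linear_mv adjm_right[OF assms]])
  show ?thesis unfolding dual_inv_def
    by (rule inv_unique_comp) (auto simp: fun_eq_iff a b)
qed

context mval begin

lemma mu_disc_nonneg: "\<mu> (cball 0 1) \<ge> 0"
proof -
  have "\<mu> {0} \<le> \<mu> (cball 0 1)" by (rule mu_mono) (auto simp: convex_body_def)
  then show ?thesis using mu_point by simp
qed

lemma mu_close:
  assumes A: "convex_body A" and B: "convex_body B" and r: "r \<ge> 0"
    and sub: "A \<subseteq> minkowski_sum B (cball 0 r)"
  shows "\<mu> A \<le> \<mu> B + r * \<mu> (cball 0 1)"
proof -
  have D: "convex_body (cball (0::complex) r)" using r by (simp add: convex_body_def)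
  have "\<mu> A \<le> \<mu> (minkowski_sum B (cball 0 r))"
    using A convex_body_minkowski_sum[OF B D] sub by (rule mu_mono)
  also have "\<dots> = \<mu> B + \<mu> (cball 0 r)" using B D by (rule mu_minkowski)
  also have "\<mu> (cball (0::complex) r) = r * \<mu> (cball 0 1)"
  proof -
    have "convex_body (cball (0::complex) 1)" by (simp add: convex_body_def)
    then show ?thesis using cball_sc[OF r] mu_sc[of "cball (0::complex) 1" r] r by metis
  qed
  finally show ?thesis .
qed

lemma h_sub:
  assumes K: "convex_body K"
  shows "\<mu> (det_set K (a + b)) \<le> \<mu> (det_set K a) + \<mu> (det_set K b)"
proof -
  have "\<mu> (det_set K (a + b)) \<le> \<mu> (minkowski_sum (det_set K a) (det_set K b))"
  proof (rule mu_mono)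
    show "convex_body (det_set K (a + b))" by (rule det_set_body[OF K])
    show "convex_body (minkowski_sum (det_set K a) (det_set K b))"
      by (rule convex_body_minkowski_sum; rule det_set_body[OF K])
  qed (rule det_set_add)
  also have "\<dots> = \<mu> (det_set K a) + \<mu> (det_set K b)"
    by (rule mu_minkowski; rule det_set_body[OF K])
  finally show ?thesis .
qed

lemma h_hom: "convex_body K \<Longrightarrow> t \<ge> 0 \<Longrightarrow> \<mu> (det_set K (t *\<^sub>R w)) = t * \<mu> (det_set K w)"
  unfolding det_set_scale by (rule mu_sc[OF det_set_body])

lemma Z_ex1:
  assumes K: "convex_body K"
  shows "\<exists>!Q. convex_body Q \<and> (\<forall>w. support_fun Q w = \<mu> (det_set K w))"
proof -
  obtain Q where Q: "convex_body Q" "\<forall>w. support_fun Q w = \<mu> (det_set K w)"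
    using sublinear_rep[of "\<lambda>w. \<mu> (det_set K w)"] h_sub[OF K] h_hom[OF K] by blast
  show ?thesis
  proof (rule ex1I[of _ Q])
    show "convex_body Q \<and> (\<forall>w. support_fun Q w = \<mu> (det_set K w))" using Q by blast
    fix Q' assume "convex_body Q' \<and> (\<forall>w. support_fun Q' w = \<mu> (det_set K w))"
    then show "Q' = Q" using Q by (intro convex_body_eq_support) auto
  qed
qed

lemma Z_prop:
  assumes K: "convex_body K"
  shows "convex_body (Zdet \<mu> K)" "\<And>w. support_fun (Zdet \<mu> K) w = \<mu> (det_set K w)"
  using theI'[OF Z_ex1[OF K]] unfolding Zdet_def by auto

lemma Z_unique:
  assumes K: "convex_body K" and Q: "convex_body Q" "\<And>w. support_fun Q w = \<mu> (det_set K w)"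
  shows "Zdet \<mu> K = Q"
  unfolding Zdet_def using Z_ex1[OF K] Q by (intro the1_equality) auto

lemma Z_trans:
  assumes K: "convex_body K"
  shows "Zdet \<mu> ((\<lambda>k. k + x) ` K) = Zdet \<mu> K"
proof (rule Z_unique)
  show "convex_body ((\<lambda>k. k + x) ` K)" using K by (rule convex_body_translate)
  show "convex_body (Zdet \<mu> K)" using Z_prop[OF K] by simp
  fix w
  have "\<mu> (det_set ((\<lambda>k. k + x) ` K) w) = \<mu> (det_set K w)"
    unfolding det_set_translate using tinv det_set_body[OF K] unfolding translation_invariant_def by blast
  then show "support_fun (Zdet \<mu> K) w = \<mu> (det_set ((\<lambda>k. k + x) ` K) w)" using Z_prop[OF K] by simp
qed

lemma Z_val:
  assumes K: "convex_body K" and L: "convex_body L" and KL: "convex_body (K \<union> L)"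
  shows "minkowski_sum (Zdet \<mu> (K \<union> L)) (Zdet \<mu> (K \<inter> L)) = minkowski_sum (Zdet \<mu> K) (Zdet \<mu> L)"
proof (rule convex_body_eq_support)
  have I: "convex_body (K \<inter> L)" using K L KL by (intro convex_body_Int) (auto simp: convex_body_def)
  show "convex_body (minkowski_sum (Zdet \<mu> (K \<union> L)) (Zdet \<mu> (K \<inter> L)))"
    using Z_prop(1)[OF KL] Z_prop(1)[OF I] by (rule convex_body_minkowski_sum)
  show "convex_body (minkowski_sum (Zdet \<mu> K) (Zdet \<mu> L))"
    using Z_prop(1)[OF K] Z_prop(1)[OF L] by (rule convex_body_minkowski_sum)
  fix w
  have cv: "convex (K \<union> L)" using KL by (simp add: convex_body_def)
  have "\<mu> (det_set (K \<union> L) w) + \<mu> (det_set (K \<inter> L) w) = \<mu> (det_set K w) + \<mu> (det_set L w)"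
    unfolding det_set_Un det_set_Int[OF K L cv]
    using det_set_body[OF K] det_set_body[OF L] det_set_body[OF KL]
    by (intro mu_val) (auto simp: det_set_Un)
  then show "support_fun (minkowski_sum (Zdet \<mu> (K \<union> L)) (Zdet \<mu> (K \<inter> L))) w =
      support_fun (minkowski_sum (Zdet \<mu> K) (Zdet \<mu> L)) w"
    by (simp add: support_fun_minkowski_sum Z_prop[OF K] Z_prop[OF L] Z_prop[OF KL] Z_prop[OF I])
qed

lemma Z_lip:
  fixes K L :: "(complex^2) set"
  assumes K: "convex_body K" and L: "convex_body L"
  shows "hausdorff_dist (Zdet \<mu> K) (Zdet \<mu> L) \<le> 2 * hausdorff_dist K L * \<mu> (cball 0 1)"
proof (rule hd_support)
  show "convex_body (Zdet \<mu> K)" "convex_body (Zdet \<mu> L)" using Z_prop K L by auto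
  have d0: "hausdorff_dist K L \<ge> 0" using K L by (intro hd_nonneg) (auto simp: convex_body_def)
  then show "0 \<le> 2 * hausdorff_dist K L * \<mu> (cball 0 1)" using mu_disc_nonneg by simp
  fix w :: "complex^2"
  have r: "2 * hausdorff_dist K L * norm w \<ge> 0" using d0 by simp
  have a: "\<mu> (det_set K w) \<le> \<mu> (det_set L w) + 2 * hausdorff_dist K L * norm w * \<mu> (cball 0 1)"
    using det_set_body[OF K] det_set_body[OF L] r det_set_close[OF K L] by (rule mu_close)
  have b: "\<mu> (det_set L w) \<le> \<mu> (det_set K w) + 2 * hausdorff_dist K L * norm w * \<mu> (cball 0 1)"
    using det_set_body[OF L] det_set_body[OF K] r det_set_close[OF L K] by (simp add: hd_sym mu_close)
  show "\<bar>support_fun (Zdet \<mu> K) w - support_fun (Zdet \<mu> L) w\<bar> \<le> 2 * hausdorff_dist K L * \<mu> (cball 0 1) * norm w"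
    using a b by (simp add: Z_prop[OF K] Z_prop[OF L] abs_le_iff algebra_simps)
qed

lemma Z_cont: "hausdorff_continuous (Zdet \<mu>) hausdorff_dist"
  unfolding hausdorff_continuous_def
proof (intro allI impI)
  fix Ks :: "nat \<Rightarrow> (complex^2) set" and K :: "(complex^2) set" assume Ks: "\<forall>n. convex_body (Ks n)" and K: "convex_body K"
    and lim: "(\<lambda>n. hausdorff_dist (Ks n) K) \<longlonglongrightarrow> 0"
  show "(\<lambda>n. hausdorff_dist (Zdet \<mu> (Ks n)) (Zdet \<mu> K)) \<longlonglongrightarrow> 0"
  proof (rule tendsto_sandwich[where f="\<lambda>_. 0" and h="\<lambda>n. 2 * hausdorff_dist (Ks n) K * \<mu> (cball 0 1)"])
    show "\<forall>\<^sub>F n in sequentially. 0 \<le> hausdorff_dist (Zdet \<mu> (Ks n)) (Zdet \<mu> K)"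
      using Ks K Z_prop(1) by (auto intro!: always_eventually hd_nonneg simp: convex_body_def)
    show "\<forall>\<^sub>F n in sequentially. hausdorff_dist (Zdet \<mu> (Ks n)) (Zdet \<mu> K) \<le> 2 * hausdorff_dist (Ks n) K * \<mu> (cball 0 1)"
      using Ks K Z_lip by (auto intro!: always_eventually)
    show "(\<lambda>n. 2 * hausdorff_dist (Ks n) K * \<mu> (cball 0 1)) \<longlonglongrightarrow> 0"
      using tendsto_mult[OF tendsto_mult[OF tendsto_const lim] tendsto_const, of 2 "\<mu> (cball 0 1)"] by simp
  qed auto
qed

lemma Z_contra:
  assumes g: "g \<in> SL2C" and K: "convex_body K"
  shows "Zdet \<mu> ((\<lambda>x. g *v x) ` K) = dual_inv g ` Zdet \<mu> K"
proof -
  have dg: "det g = 1" using g by (simp add: SL2C_def)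
  define H where "H = (\<lambda>x::complex^2. adjm g *v x)"
  have linH: "linear H" unfolding H_def by (rule linear_mv)
  have di: "dual_inv g = adjoint H" unfolding H_def by (rule dual_inv_eq[OF dg])
  show ?thesis unfolding di
  proof (rule Z_unique)
    show "convex_body ((\<lambda>x. g *v x) ` K)" using K linear_mv by (rule convex_body_linear_image)
    show "convex_body (adjoint H ` Zdet \<mu> K)"
      using Z_prop(1)[OF K] adjoint_linear[OF linH] by (rule convex_body_linear_image)
    fix w
    have "support_fun (adjoint H ` Zdet \<mu> K) w = support_fun (Zdet \<mu> K) (H w)"
      using support_fun_linear_image[OF adjoint_linear[OF linH]] adjoint_adjoint[OF linH] by simp
    also have "\<dots> = \<mu> (det_set K (H w))" by (rule Z_prop(2)[OF K])
    also have "det_set K (H w) = det_set ((\<lambda>x. g *v x) ` K) w"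
      unfolding det_set_def image_image H_def by (simp add: det2_matrix)
    finally show "support_fun (adjoint H ` Zdet \<mu> K) w = \<mu> (det_set ((\<lambda>x. g *v x) ` K) w)" .
  qed
qed

end

theorem proposition3p3:
  fixes \<mu> :: "complex set \<Rightarrow> real"
  assumes "real_valuation \<mu>"
    and "hausdorff_continuous \<mu> (\<lambda>a b. dist a b)"
    and "translation_invariant \<mu>"
    and "monotone_on_bodies \<mu>"
    and "homogeneous_deg1 \<mu>"
  shows "(\<forall>K::(complex^2) set. convex_body K \<longrightarrow>
            (\<exists>!Q. convex_body Q \<and> (\<forall>w. support_fun Q w = \<mu> (det_set K w))))
     \<and> hausdorff_continuous (Zdet \<mu>) hausdorff_dist
     \<and> translation_invariant (Zdet \<mu>)
     \<and> (\<forall>g\<in>SL2C. \<forall>K. convex_body K \<longrightarrow>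
            Zdet \<mu> ((\<lambda>x. g *v x) ` K) = dual_inv g ` Zdet \<mu> K)
     \<and> minkowski_valuation (Zdet \<mu>)"
proof -
  interpret mval \<mu> using assms by unfold_locales
  have 1: "\<forall>K::(complex^2) set. convex_body K \<longrightarrow>
            (\<exists>!Q. convex_body Q \<and> (\<forall>w. support_fun Q w = \<mu> (det_set K w)))"
    using Z_ex1 by blast
  have 3: "translation_invariant (Zdet \<mu>)"
    unfolding translation_invariant_def using Z_trans by blast
  have 4: "\<forall>g\<in>SL2C. \<forall>K. convex_body K \<longrightarrow>
            Zdet \<mu> ((\<lambda>x. g *v x) ` K) = dual_inv g ` Zdet \<mu> K"
    using Z_contra by blast
  have 5: "minkowski_valuation (Zdet \<mu>)"
    unfolding minkowski_valuation_def using Z_val by blast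
  show ?thesis using 1 Z_cont 3 4 5 by (intro conjI)
qed


end
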